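(* Let $\mathcal{H}\subseteq\mathcal{F}$ be saturated fusion systems over a finite $p$-group $S$, let $P\le S$ be fully $\mathcal{F}$-normalized and let $\mathcal{N}:=N_{\mathcal{F}}(P)\cap\mathcal{H}$. Then $N_{\mathcal{H}}(P)\subseteq\mathcal{N}$, and the morphisms of $\mathcal{N}$ and $N_{\mathcal{H}}(P)$ between $\mathcal{F}$-centric subgroups coincide. In particular $\mathcal{O}_{\mathcal{C}}(\mathcal{N})=\mathcal{O}_{\mathcal{C}}(N_{\mathcal{H}}(P))$ for every family $\mathcal{C}$ of $\mathcal{F}$-centric subgroups of $S$.
   Context: $P$ is fully $\mathcal{F}$-normalized if $|N_S(P)|\ge|N_S(Q)|$ for all $\mathcal{F}$-conjugates $Q$ of $P$. $N_{\mathcal{F}}(P)$ is the fusion system over $N_S(P)$ whose morphisms $A\to B$ are those $\varphi\in\operatorname{Hom}_{\mathcal{F}}(A,B)$ extending to some $\hat\varphi\in\operatorname{Hom}_{\mathcal{F}}(AP,BP)$ with $\hat\varphi(P)=P$; similarly $N_{\mathcal{H}}(P)$. $\mathcal{N}=N_{\mathcal{F}}(P)\cap\mathcal{H}$ is the fusion system over $N_S(P)$ whose morphisms are those lying in both $N_{\mathcal{F}}(P)$ and $\mathcal{H}$. A subgroup is $\mathcal{F}$-centric if $C_S(Q)\le Q$ for all its $\mathcal{F}$-conjugates $Q$. $\mathcal{O}_{\mathcal{C}}(\mathcal{E})$ is the full subcategory on $\mathcal{C}$ (intersected with the subgroups of the base group of $\mathcal{E}$) of the orbit category of $\mathcal{E}$,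 whose morphisms are $\operatorname{Aut}_Q(Q)\backslash\operatorname{Hom}_{\mathcal{E}}(R,Q)$. *)

theory Defs
  imports "HOL-Algebra.Algebra"
begin

text \<open>A (candidate)
fusion system is given by its morphism sets: F A B is the set of morphisms from A
to B, each represented as a function that is extensional on A (undefined outside A).\<close>

type_synonym 'a fus = "'a set \<Rightarrow> 'a set \<Rightarrow> ('a \<Rightarrow> 'a) set"

definition cj :: "('a, 'b) monoid_scheme \<Rightarrow> 'a \<Rightarrow> 'a \<Rightarrow> 'a" where
  "cj S g = (\<lambda>x. g \<otimes>\<^bsub>S\<^esub> x \<otimes>\<^bsub>S\<^esub> inv\<^bsub>S\<^esub> g)"

definition normS :: "('a, 'b) monoid_scheme \<Rightarrow> 'a set \<Rightarrow> 'a set" where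
  "normS S P = {g \<in> carrier S. cj S g ` P = P}"

definition centS :: "('a, 'b) monoid_scheme \<Rightarrow> 'a set \<Rightarrow> 'a set" where
  "centS S P = {g \<in> carrier S. \<forall>x\<in>P. g \<otimes>\<^bsub>S\<^esub> x = x \<otimes>\<^bsub>S\<^esub> g}"

definition HomT :: "('a, 'b) monoid_scheme \<Rightarrow> 'a set \<Rightarrow> 'a set \<Rightarrow> 'a set \<Rightarrow> ('a \<Rightarrow> 'a) set" where
  "HomT S T A B = {restrict (cj S g) A | g. g \<in> T \<and> cj S g ` A \<subseteq> B}"

definition Inj :: "('a, 'b) monoid_scheme \<Rightarrow> 'a set \<Rightarrow> 'a set \<Rightarrow> ('a \<Rightarrow> 'a) set" where
  "Inj S A B = {\<phi>. \<phi> \<in> extensional A \<and> \<phi> ` A \<subseteq> B \<and> inj_on \<phi> A \<and>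
      (\<forall>x\<in>A. \<forall>y\<in>A. \<phi> (x \<otimes>\<^bsub>S\<^esub> y) = \<phi> x \<otimes>\<^bsub>S\<^esub> \<phi> y)}"

text \<open>Fusion system over the subgroup T of S (T = S or T = N_S(P)).\<close>
definition fusion_system :: "('a, 'b) monoid_scheme \<Rightarrow> 'a set \<Rightarrow> 'a fus \<Rightarrow> bool" where
  "fusion_system S T F \<longleftrightarrow> group S \<and> subgroup T S \<and>
    (\<forall>A B. \<not> (subgroup A S \<and> A \<subseteq> T \<and> subgroup B S \<and> B \<subseteq> T) \<longrightarrow> F A B = {}) \<and>
    (\<forall>A B. subgroup A S \<and> A \<subseteq> T \<and> subgroup B S \<and> B \<subseteq> T \<longrightarrow>
        HomT S T A B \<subseteq> F A B \<and> F A B \<subseteq> Inj S A B) \<and>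
    (\<forall>A B C \<phi> \<psi>. \<phi> \<in> F A B \<longrightarrow> \<psi> \<in> F B C \<longrightarrow> compose A \<psi> \<phi> \<in> F A C) \<and>
    (\<forall>A B \<phi>. \<phi> \<in> F A B \<longrightarrow> \<phi> \<in> F A (\<phi> ` A) \<and>
        restrict (inv_into A \<phi>) (\<phi> ` A) \<in> F (\<phi> ` A) A)"

definition F_conj :: "('a, 'b) monoid_scheme \<Rightarrow> 'a fus \<Rightarrow> 'a set \<Rightarrow> 'a set \<Rightarrow> bool" where
  "F_conj S F A B \<longleftrightarrow> (\<exists>\<phi>\<in>F A (carrier S). \<phi> ` A = B)"

definition fully_normalized :: "('a, 'b) monoid_scheme \<Rightarrow> 'a fus \<Rightarrow> 'a set \<Rightarrow> bool" where
  "fully_normalized S F P \<longleftrightarrow> subgroup P S \<and>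
     (\<forall>Q. F_conj S F P Q \<longrightarrow> card (normS S Q) \<le> card (normS S P))"

definition fully_centralized :: "('a, 'b) monoid_scheme \<Rightarrow> 'a fus \<Rightarrow> 'a set \<Rightarrow> bool" where
  "fully_centralized S F P \<longleftrightarrow> subgroup P S \<and>
     (\<forall>Q. F_conj S F P Q \<longrightarrow> card (centS S Q) \<le> card (centS S P))"

definition is_p_group :: "nat \<Rightarrow> ('a, 'b) monoid_scheme \<Rightarrow> bool" where
  "is_p_group p S \<longleftrightarrow> group S \<and> Factorial_Ring.prime p \<and> finite (carrier S) \<and> (\<exists>n. card (carrier S) = p ^ n)"

text \<open>Saturation (Broto-Levi-Oliver): (I) fully normalized subgroups are fully centralized
and Aut_S(P) is a Sylow p-subgroup of Aut_F(P) (i.e. of p'-index, Aut_S(P) being a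
p-subgroup of Aut_F(P)); (II) extension axiom.\<close>
definition N_phi :: "('a, 'b) monoid_scheme \<Rightarrow> 'a set \<Rightarrow> ('a \<Rightarrow> 'a) \<Rightarrow> 'a set" where
  "N_phi S P \<phi> = {g \<in> normS S P. \<exists>h \<in> normS S (\<phi> ` P).
      \<forall>x \<in> \<phi> ` P. \<phi> (cj S g (inv_into P \<phi> x)) = cj S h x}"

definition saturated :: "nat \<Rightarrow> ('a, 'b) monoid_scheme \<Rightarrow> 'a fus \<Rightarrow> bool" where
  "saturated p S F \<longleftrightarrow> is_p_group p S \<and> fusion_system S (carrier S) F \<and>
    (\<forall>P. fully_normalized S F P \<longrightarrow> fully_centralized S F P \<and>
        (\<exists>m. card (F P P) = card (HomT S (carrier S) P P) * m \<and> \<not> p dvd m)) \<and>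
    (\<forall>P \<phi>. \<phi> \<in> F P (carrier S) \<longrightarrow> fully_centralized S F (\<phi> ` P) \<longrightarrow>
        (\<exists>\<psi> \<in> F (N_phi S P \<phi>) (carrier S). \<forall>x\<in>P. \<psi> x = \<phi> x))"

definition normF :: "('a, 'b) monoid_scheme \<Rightarrow> 'a fus \<Rightarrow> 'a set \<Rightarrow> 'a fus" where
  "normF S F P A B = (if A \<subseteq> normS S P \<and> B \<subseteq> normS S P then
     {\<phi> \<in> F A B. \<exists>\<psi> \<in> F (A <#>\<^bsub>S\<^esub> P) (B <#>\<^bsub>S\<^esub> P).
         \<psi> ` P = P \<and> (\<forall>x\<in>A. \<psi> x = \<phi> x)} else {})"

definition inter_fus :: "'a fus \<Rightarrow> 'a fus \<Rightarrow> 'a fus" where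
  "inter_fus E H A B = E A B \<inter> H A B"

definition subsystem :: "'a fus \<Rightarrow> 'a fus \<Rightarrow> bool" where
  "subsystem H F \<longleftrightarrow> (\<forall>A B. H A B \<subseteq> F A B)"

definition centric :: "('a, 'b) monoid_scheme \<Rightarrow> 'a fus \<Rightarrow> 'a set \<Rightarrow> bool" where
  "centric S F Q \<longleftrightarrow> subgroup Q S \<and> (\<forall>Q'. F_conj S F Q Q' \<longrightarrow> centS S Q' \<subseteq> Q')"

text \<open>Morphisms of the orbit category: Aut_Q(Q)\Hom_E(R,Q), orbits under post-composition.\<close>
definition orbit_hom :: "('a, 'b) monoid_scheme \<Rightarrow> 'a fus \<Rightarrow> 'a set \<Rightarrow> 'a set \<Rightarrow> ('a \<Rightarrow> 'a) set set" where
  "orbit_hom S E R Q = {(\<lambda>\<alpha>. compose R \<alpha> \<phi>) ` HomT S Q Q Q | \<phi>. \<phi> \<in> E R Q}"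

end

theory Submission
  imports Defs
begin

context group begin
lemma inv_cancel_l: "g \<in> carrier G \<Longrightarrow> z \<in> carrier G \<Longrightarrow> inv g \<otimes> (g \<otimes> z) = z"
  by (simp add: m_assoc[symmetric])
lemma inv_cancel_l2: "g \<in> carrier G \<Longrightarrow> z \<in> carrier G \<Longrightarrow> g \<otimes> (inv g \<otimes> z) = z"
  by (simp add: m_assoc[symmetric])
lemma inv_cancel_r: "g \<in> carrier G \<Longrightarrow> z \<in> carrier G \<Longrightarrow> z \<otimes> inv g \<otimes> g = z"
  by (simp add: m_assoc)
lemma inv_cancel_r2: "g \<in> carrier G \<Longrightarrow> z \<in> carrier G \<Longrightarrow> z \<otimes> g \<otimes> inv g = z"
  by (simp add: m_assoc)
lemma cj_one: "x \<in> carrier G \<Longrightarrow> cj G \<one> x = x"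
  by (simp add: cj_def)
lemma cj_carrier: "g \<in> carrier G \<Longrightarrow> x \<in> carrier G \<Longrightarrow> cj G g x \<in> carrier G"
  by (simp add: cj_def)
lemma cj_mult: "g \<in> carrier G \<Longrightarrow> h \<in> carrier G \<Longrightarrow> x \<in> carrier G
   \<Longrightarrow> cj G (g \<otimes> h) x = cj G g (cj G h x)"
  by (simp add: cj_def inv_mult_group m_assoc)
lemma cj_hom: "g \<in> carrier G \<Longrightarrow> x \<in> carrier G \<Longrightarrow> y \<in> carrier G
   \<Longrightarrow> cj G g (x \<otimes> y) = cj G g x \<otimes> cj G g y"
  by (simp add: cj_def m_assoc inv_cancel_l)
lemma cj_inv: "g \<in> carrier G \<Longrightarrow> x \<in> carrier G \<Longrightarrow> cj G (inv g) (cj G g x) = x"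
  by (simp add: cj_def m_assoc inv_cancel_l)
lemma cj_inv2: "g \<in> carrier G \<Longrightarrow> x \<in> carrier G \<Longrightarrow> cj G g (cj G (inv g) x) = x"
  by (metis cj_inv inv_closed inv_inv)
lemma cj_comm: "g \<in> carrier G \<Longrightarrow> x \<in> carrier G \<Longrightarrow> g \<otimes> x = x \<otimes> g \<Longrightarrow> cj G g x = x"
  by (simp add: cj_def m_assoc)
lemma cj_comm_iff: "g \<in> carrier G \<Longrightarrow> x \<in> carrier G \<Longrightarrow> cj G g x = x \<longleftrightarrow> g \<otimes> x = x \<otimes> g"
  apply (rule iffI)
   apply (simp add: cj_def)
   apply (metis inv_solve_right m_closed)
  by (simp add: cj_comm)
end

locale fsys =
  fixes S :: "'a monoid" (structure) and F :: "'a fus"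
  assumes fs: "fusion_system S (carrier S) F"
begin

lemma grp: "group S" using fs by (simp add: fusion_system_def)

lemma fs_empty: "\<forall>A B. \<not> (subgroup A S \<and> A \<subseteq> carrier S \<and> subgroup B S \<and> B \<subseteq> carrier S) \<longrightarrow> F A B = {}"
  using fs unfolding fusion_system_def by (elim conjE) assumption
lemma fs_hom: "\<forall>A B. subgroup A S \<and> A \<subseteq> carrier S \<and> subgroup B S \<and> B \<subseteq> carrier S \<longrightarrow>
        HomT S (carrier S) A B \<subseteq> F A B \<and> F A B \<subseteq> Inj S A B"
  using fs unfolding fusion_system_def by (elim conjE) assumption
lemma fs_comp: "\<forall>A B C \<phi> \<psi>. \<phi> \<in> F A B \<longrightarrow> \<psi> \<in> F B C \<longrightarrow> compose A \<psi> \<phi> \<in> F A C"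
  using fs unfolding fusion_system_def by (elim conjE) assumption
lemma fs_img: "\<forall>A B \<phi>. \<phi> \<in> F A B \<longrightarrow> \<phi> \<in> F A (\<phi> ` A) \<and>
        restrict (inv_into A \<phi>) (\<phi> ` A) \<in> F (\<phi> ` A) A"
  using fs unfolding fusion_system_def by (elim conjE) assumption

sublocale group S by (rule grp)

lemma F_sub: "\<phi> \<in> F A B \<Longrightarrow> subgroup A S \<and> subgroup B S"
  using fs_empty by (metis empty_iff subgroup.subset)

lemma F_Inj: "\<phi> \<in> F A B \<Longrightarrow> \<phi> \<in> Inj S A B"
  using fs_hom F_sub by (meson subgroup.subset subsetD)

lemma F_ext: "\<phi> \<in> F A B \<Longrightarrow> \<phi> \<in> extensional A" using F_Inj by (simp add: Inj_def)
lemma F_into: "\<phi> \<in> F A B \<Longrightarrow> x \<in> A \<Longrightarrow> \<phi> x \<in> B" using F_Inj[of \<phi> A B] by (auto simp add: Inj_def)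
lemma F_inj: "\<phi> \<in> F A B \<Longrightarrow> inj_on \<phi> A" using F_Inj by (simp add: Inj_def)
lemma F_hom: "\<phi> \<in> F A B \<Longrightarrow> x \<in> A \<Longrightarrow> y \<in> A \<Longrightarrow> \<phi> (x \<otimes> y) = \<phi> x \<otimes> \<phi> y"
  using F_Inj by (simp add: Inj_def)
lemma F_carrier: "\<phi> \<in> F A B \<Longrightarrow> x \<in> A \<Longrightarrow> \<phi> x \<in> carrier S"
  by (meson F_into F_sub subgroup.mem_carrier)
lemma F_dom_carrier: "\<phi> \<in> F A B \<Longrightarrow> x \<in> A \<Longrightarrow> x \<in> carrier S"
  by (meson F_sub subgroup.mem_carrier)

lemma F_one: "\<phi> \<in> F A B \<Longrightarrow> \<phi> \<one> = \<one>"
proof -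
  assume a: "\<phi> \<in> F A B"
  have A: "subgroup A S" using F_sub a by blast
  have "\<phi> (\<one> \<otimes> \<one>) = \<phi> \<one> \<otimes> \<phi> \<one>" using F_hom[OF a] subgroup.one_closed[OF A] by blast
  hence "\<phi> \<one> \<otimes> \<phi> \<one> = \<phi> \<one>" by simp
  thus ?thesis using F_carrier[OF a subgroup.one_closed[OF A]]
    by (metis l_cancel_one')
qed

lemma F_inv_el: "\<phi> \<in> F A B \<Longrightarrow> x \<in> A \<Longrightarrow> \<phi> (inv x) = inv (\<phi> x)"
proof -
  assume a: "\<phi> \<in> F A B" and x: "x \<in> A"
  have A: "subgroup A S" using F_sub a by blast
  have ix: "inv x \<in> A" by (rule subgroup.m_inv_closed[OF A x])
  have xc: "x \<in> carrier S" by (rule subgroup.mem_carrier[OF A x])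
  have "\<phi> x \<otimes> \<phi> (inv x) = \<phi> (x \<otimes> inv x)" using F_hom[OF a x ix] by simp
  also have "\<dots> = \<one>" using xc F_one[OF a] by simp
  finally have e: "\<phi> x \<otimes> \<phi> (inv x) = \<one>" .
  have c1: "\<phi> x \<in> carrier S" "\<phi> (inv x) \<in> carrier S" using F_carrier[OF a x] F_carrier[OF a ix] by auto
  have "\<phi> (inv x) = inv (\<phi> x) \<otimes> (\<phi> x \<otimes> \<phi> (inv x))" using inv_cancel_l c1 by simp
  also have "\<dots> = inv (\<phi> x)" using e c1 by simp
  finally show ?thesis .
qed

lemma F_cj: "\<phi> \<in> F A B \<Longrightarrow> g \<in> A \<Longrightarrow> x \<in> A \<Longrightarrow> \<phi> (cj S g x) = cj S (\<phi> g) (\<phi> x)"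
  unfolding cj_def
  by (metis F_hom F_inv_el F_sub subgroup.m_closed subgroup.m_inv_closed)

lemma HomT_in: "subgroup A S \<Longrightarrow> subgroup B S \<Longrightarrow> g \<in> carrier S \<Longrightarrow> cj S g ` A \<subseteq> B
   \<Longrightarrow> restrict (cj S g) A \<in> F A B"
proof -
  assume a: "subgroup A S" "subgroup B S" "g \<in> carrier S" "cj S g ` A \<subseteq> B"
  have "restrict (cj S g) A \<in> HomT S (carrier S) A B" unfolding HomT_def using a by blast
  moreover have "HomT S (carrier S) A B \<subseteq> F A B"
    using fs_hom a(1,2) subgroup.subset by blast
  ultimately show ?thesis by blast
qed

lemma F_comp: "\<phi> \<in> F A B \<Longrightarrow> \<psi> \<in> F B C \<Longrightarrow> compose A \<psi> \<phi> \<in> F A C"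
  using fs_comp by blast

lemma F_img: "\<phi> \<in> F A B \<Longrightarrow> \<phi> \<in> F A (\<phi>`A)"
  using fs_img by blast

lemma F_inv: "\<phi> \<in> F A B \<Longrightarrow> restrict (inv_into A \<phi>) (\<phi>`A) \<in> F (\<phi>`A) A"
  using fs_img by blast

lemma F_img_sub: "\<phi> \<in> F A B \<Longrightarrow> subgroup (\<phi>`A) S"
  using F_img F_sub by blast

lemma F_enlarge: "\<phi> \<in> F A B \<Longrightarrow> subgroup B' S \<Longrightarrow> \<phi>`A \<subseteq> B' \<Longrightarrow> \<phi> \<in> F A B'"
proof -
  assume a: "\<phi> \<in> F A B" and B': "subgroup B' S" and im: "\<phi>`A \<subseteq> B'"
  have i: "restrict (cj S \<one>) (\<phi>`A) \<in> F (\<phi>`A) B'"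
  proof (rule HomT_in[OF F_img_sub[OF a] B' one_closed])
    show "cj S \<one> ` \<phi> ` A \<subseteq> B'"
    proof
      fix y assume "y \<in> cj S \<one> ` \<phi> ` A"
      then obtain x where x: "x \<in> A" "y = cj S \<one> (\<phi> x)" by blast
      have "y = \<phi> x" using x cj_one F_carrier[OF a x(1)] by simp
      thus "y \<in> B'" using im x by blast
    qed
  qed
  have "compose A (restrict (cj S \<one>) (\<phi>`A)) \<phi> = \<phi>"
  proof
    fix x show "compose A (restrict (cj S \<one>) (\<phi>`A)) \<phi> x = \<phi> x"
      by (cases "x \<in> A") (simp_all add: compose_def cj_one F_carrier[OF a] extensional_arb[OF F_ext[OF a]])
  qed
  thus ?thesis using F_comp[OF F_img[OF a] i] by (simp only:)
qed

lemma incl_in: "subgroup A' S \<Longrightarrow> subgroup A S \<Longrightarrow> A' \<subseteq> A \<Longrightarrow> restrict (cj S \<one>) A' \<in> F A' A"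
proof (rule HomT_in[OF _ _ one_closed])
  assume A': "subgroup A' S" and s: "A' \<subseteq> A"
  show "cj S \<one> ` A' \<subseteq> A"
  proof
    fix y assume "y \<in> cj S \<one> ` A'"
    then obtain x where x: "x \<in> A'" "y = cj S \<one> x" by blast
    have "y = x" using x cj_one subgroup.mem_carrier[OF A' x(1)] by simp
    thus "y \<in> A" using s x(1) by (simp add: subset_iff)
  qed
qed

lemma F_restrict: "\<phi> \<in> F A B \<Longrightarrow> subgroup A' S \<Longrightarrow> A' \<subseteq> A \<Longrightarrow> restrict \<phi> A' \<in> F A' B"
proof -
  assume a: "\<phi> \<in> F A B" and A': "subgroup A' S" and s: "A' \<subseteq> A"
  have i: "restrict (cj S \<one>) A' \<in> F A' A"
    by (rule incl_in[OF A' conjunct1[OF F_sub[OF a]] s])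
  have "compose A' \<phi> (restrict (cj S \<one>) A') = restrict \<phi> A'"
  proof
    fix x show "compose A' \<phi> (restrict (cj S \<one>) A') x = restrict \<phi> A' x"
      by (cases "x \<in> A'") (simp_all add: compose_def cj_one subgroup.mem_carrier[OF A'])
  qed
  thus ?thesis using F_comp[OF i a] by (simp only:)
qed

lemma F_conj_def2: "F_conj S F A B \<longleftrightarrow> (\<exists>\<phi>. \<phi> \<in> F A (carrier S) \<and> \<phi>`A = B)"
  by (auto simp: F_conj_def)

lemma F_conj_refl: "subgroup A S \<Longrightarrow> F_conj S F A A"
proof -
  assume A: "subgroup A S"
  have "restrict (cj S \<one>) A \<in> F A (carrier S)"
    by (rule incl_in[OF A subgroup_self subgroup.subset[OF A]])
  moreover have "restrict (cj S \<one>) A ` A = A"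
  proof -
    have "\<And>x. x \<in> A \<Longrightarrow> restrict (cj S \<one>) A x = x" using cj_one subgroup.mem_carrier[OF A] by simp
    thus ?thesis by (simp cong: image_cong)
  qed
  ultimately show ?thesis unfolding F_conj_def by blast
qed

lemma F_conj_trans: "F_conj S F A B \<Longrightarrow> F_conj S F B C \<Longrightarrow> F_conj S F A C"
proof -
  assume "F_conj S F A B" "F_conj S F B C"
  then obtain \<phi> \<psi> where p: "\<phi> \<in> F A (carrier S)" "\<phi>`A = B" and q: "\<psi> \<in> F B (carrier S)" "\<psi>`B = C"
    unfolding F_conj_def by blast
  have "\<phi> \<in> F A B" using F_img[OF p(1)] p(2) by simp
  hence "compose A \<psi> \<phi> \<in> F A (carrier S)" using F_comp q(1) by blast
  moreover have "compose A \<psi> \<phi> ` A = C" using p(2) q(2) by (auto simp: compose_def image_def)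
  ultimately show ?thesis unfolding F_conj_def by blast
qed

lemma F_conj_of: "\<phi> \<in> F A B \<Longrightarrow> F_conj S F A (\<phi>`A)"
  unfolding F_conj_def using F_enlarge F_img F_carrier subgroup_self by blast

end

lemma fixpt:
  fixes Z :: "('g, 'c) monoid_scheme" and E :: "'x set" and a :: "'g \<Rightarrow> 'x \<Rightarrow> 'x"
  assumes Z: "group Z" and fin: "finite (carrier Z)" and cZ: "card (carrier Z) = p ^ k"
    and p: "Factorial_Ring.prime p" and finE: "finite E" and nd: "\<not> p dvd card E"
    and cl: "\<And>g x. g \<in> carrier Z \<Longrightarrow> x \<in> E \<Longrightarrow> a g x \<in> E"
    and one: "\<And>x. x \<in> E \<Longrightarrow> a \<one>\<^bsub>Z\<^esub> x = x"
    and mul: "\<And>g h x. g \<in> carrier Z \<Longrightarrow> h \<in> carrier Z \<Longrightarrow> x \<in> E \<Longrightarrow> a (g \<otimes>\<^bsub>Z\<^esub> h) x = a g (a h x)"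
  shows "\<exists>x\<in>E. \<forall>g\<in>carrier Z. a g x = x"
proof (rule ccontr)
  assume nf: "\<not> (\<exists>x\<in>E. \<forall>g\<in>carrier Z. a g x = x)"
  interpret Z: group Z by (rule Z)
  define \<phi> where "\<phi> g = (\<lambda>x\<in>E. a g x)" for g
  have inva: "a (inv\<^bsub>Z\<^esub> g) (a g x) = x" if "g \<in> carrier Z" "x \<in> E" for g x
  proof -
    have "a (inv\<^bsub>Z\<^esub> g) (a g x) = a (inv\<^bsub>Z\<^esub> g \<otimes>\<^bsub>Z\<^esub> g) x"
      using that mul[of "inv\<^bsub>Z\<^esub> g" g x] by simp
    also have "\<dots> = x" using that one by simp
    finally show ?thesis .
  qed
  have inva2: "a g (a (inv\<^bsub>Z\<^esub> g) x) = x" if "g \<in> carrier Z" "x \<in> E" for g x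
  proof -
    have "a g (a (inv\<^bsub>Z\<^esub> g) x) = a (g \<otimes>\<^bsub>Z\<^esub> inv\<^bsub>Z\<^esub> g) x"
      using that mul[of g "inv\<^bsub>Z\<^esub> g" x] by simp
    also have "\<dots> = x" using that one by simp
    finally show ?thesis .
  qed
  have bij: "\<phi> g \<in> Bij E" if g: "g \<in> carrier Z" for g
  proof -
    have "bij_betw (a g) E E"
    proof (rule bij_betw_byWitness[where f' = "a (inv\<^bsub>Z\<^esub> g)"])
      show "\<forall>x\<in>E. a (inv\<^bsub>Z\<^esub> g) (a g x) = x" by (intro ballI inva[OF g])
      show "\<forall>x\<in>E. a g (a (inv\<^bsub>Z\<^esub> g) x) = x" by (intro ballI inva2[OF g])
      show "a g ` E \<subseteq> E" by (intro image_subsetI cl[OF g])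
      show "a (inv\<^bsub>Z\<^esub> g) ` E \<subseteq> E" by (intro image_subsetI cl[OF Z.inv_closed[OF g]])
    qed
    hence "bij_betw (\<phi> g) E E" unfolding \<phi>_def using bij_betw_cong[of E "\<lambda>x\<in>E. a g x" "a g" E] by simp
    thus ?thesis unfolding Bij_def \<phi>_def by simp
  qed
  have hom: "group_hom Z (BijGroup E) \<phi>"
  proof (rule group_hom.intro[OF Z group_BijGroup])
    show "group_hom_axioms Z (BijGroup E) \<phi>"
    proof
      show "\<phi> \<in> hom Z (BijGroup E)"
      proof (rule homI)
        show "\<phi> x \<in> carrier (BijGroup E)" if "x \<in> carrier Z" for x
          using bij[OF that] by (simp add: BijGroup_def)
        show "\<phi> (x \<otimes>\<^bsub>Z\<^esub> y) = \<phi> x \<otimes>\<^bsub>BijGroup E\<^esub> \<phi> y" if "x \<in> carrier Z" "y \<in> carrier Z" for x y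
        proof -
          have "\<phi> (x \<otimes>\<^bsub>Z\<^esub> y) = compose E (\<phi> x) (\<phi> y)"
          proof
            fix z show "\<phi> (x \<otimes>\<^bsub>Z\<^esub> y) z = compose E (\<phi> x) (\<phi> y) z"
              by (cases "z \<in> E") (simp_all add: \<phi>_def compose_def mul[OF that] cl that)
          qed
          thus ?thesis using bij that by (simp add: BijGroup_def)
        qed
      qed
    qed
  qed
  interpret A: group_action Z E \<phi> by (rule group_action.intro[OF hom])
  have orbit_eq: "orbit Z \<phi> x = {a g x | g. g \<in> carrier Z}" if "x \<in> E" for x
    using that by (simp add: orbit_def \<phi>_def)
  have pdvd: "p dvd card Ob" if Ob: "Ob \<in> orbits Z E \<phi>" for Ob
  proof -
    obtain x where x: "x \<in> E" "Ob = orbit Z \<phi> x" using Ob by (auto simp: orbits_def)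
    have "card Ob * card (stabilizer Z \<phi> x) = p ^ k"
      using A.orbit_stabilizer_theorem[OF x(1)] x(2) cZ by (simp add: order_def)
    hence "card Ob dvd p ^ k" by (metis dvd_triv_left)
    then obtain i where i: "i \<le> k" "card Ob = p ^ i" using divides_primepow_nat[OF p] by blast
    show ?thesis
    proof (cases i)
      case 0
      hence c1: "card Ob = 1" using i by simp
      have xO: "x \<in> Ob" using x orbit_eq[OF x(1)] one Z.one_closed by force
      have "\<forall>g\<in>carrier Z. a g x = x"
      proof
        fix g assume g: "g \<in> carrier Z"
        have "a g x \<in> Ob" using x orbit_eq[OF x(1)] g by blast
        thus "a g x = x" using xO c1 by (metis card_1_singletonE singletonD)
      qed
      thus ?thesis using nf x(1) by blast
    next
      case (Suc j) thus ?thesis using i by simp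
    qed
  qed
  have "card E = (\<Sum>Ob\<in>orbits Z E \<phi>. card Ob)"
    using A.disjoint_sum[OF finE, of "\<lambda>_. (1::nat)"] by simp
  hence "p dvd card E" using pdvd by (simp add: dvd_sum)
  thus False using nd by simp
qed

lemma (in group) card_subgroup_ppow:
  assumes fin: "finite (carrier G)" and cG: "card (carrier G) = p ^ n" and p: "Factorial_Ring.prime p"
    and R: "subgroup R G"
  shows "\<exists>b\<le>n. card R = p ^ b"
proof -
  have "card (rcosets R) * card R = p ^ n" using lagrange[OF R] cG by (simp add: order_def)
  hence "card R dvd p ^ n" by (metis dvd_triv_right)
  thus ?thesis using divides_primepow_nat[OF p] by blast
qed

lemma (in group) norm_grow:
  assumes fin: "finite (carrier G)" and cG: "card (carrier G) = p ^ n" and p: "Factorial_Ring.prime p"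
    and Q: "subgroup Q G" and R: "subgroup R G" and QR: "Q \<subseteq> R" "Q \<noteq> R"
  shows "\<exists>r\<in>R. r \<notin> Q \<and> (\<forall>q\<in>Q. cj G r q \<in> Q)"
proof -
  define RR where "RR = G\<lparr>carrier := R\<rparr>"
  have gRR: "group RR" unfolding RR_def by (rule subgroup_imp_group[OF R])
  have QRR: "subgroup Q RR" unfolding RR_def by (rule subgroup_incl[OF Q R QR(1)])
  obtain b where b: "card R = p ^ b" using card_subgroup_ppow[OF fin cG p R] by blast
  obtain a where a: "card Q = p ^ a" using card_subgroup_ppow[OF fin cG p Q] by blast
  have finR: "finite R" using fin R subgroup.subset finite_subset by blast
  have "card Q < card R" using psubset_card_mono[OF finR] QR by blast
  hence ab: "a < b" using a b p by (metis nat_power_less_imp_less prime_gt_0_nat)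
  have lag: "card (rcosets\<^bsub>RR\<^esub> Q) * p ^ a = p ^ b"
    using group.lagrange[OF gRR QRR] a b by (simp add: order_def RR_def)
  have pb: "p ^ b = p ^ (b - a) * p ^ a" using ab by (simp add: power_add[symmetric])
  have pa0: "p ^ a > 0" using p by (simp add: prime_gt_0_nat)
  have rc0: "card (rcosets\<^bsub>RR\<^esub> Q) * p ^ a = p ^ (b - a) * p ^ a" using lag pb by simp
  have rc: "card (rcosets\<^bsub>RR\<^esub> Q) = p ^ (b - a)"
    using rc0 mult_right_cancel[of "p ^ a" "card (rcosets\<^bsub>RR\<^esub> Q)" "p ^ (b - a)"] pa0 by simp
  have pdvd: "p dvd card (rcosets\<^bsub>RR\<^esub> Q)" using rc ab by simp
  have rcs: "rcosets\<^bsub>RR\<^esub> Q = {Q #> r | r. r \<in> R}"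
    by (auto simp: RCOSETS_def r_coset_def RR_def)
  have Qc: "Q \<subseteq> carrier G" using Q subgroup.subset by blast
  have Rc: "R \<subseteq> carrier G" using R subgroup.subset by blast
  have QinRC: "Q \<in> rcosets\<^bsub>RR\<^esub> Q"
    unfolding rcs using coset_mult_one[OF Qc] subgroup.one_closed[OF R] by (metis (mono_tags, lifting) mem_Collect_eq)
  define E where "E = rcosets\<^bsub>RR\<^esub> Q - {Q}"
  have finRC: "finite (rcosets\<^bsub>RR\<^esub> Q)" using rc ab
    by (metis card.infinite nat.simps(3) p pa0 power_not_zero prime_gt_0_nat zero_less_iff_neq_zero)
  have cE: "card E = card (rcosets\<^bsub>RR\<^esub> Q) - 1" unfolding E_def using QinRC finRC by simp
  have cpos: "card (rcosets\<^bsub>RR\<^esub> Q) \<ge> 1" using rc p by (simp add: prime_gt_0_nat Suc_leI)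
  have ndE: "\<not> p dvd card E"
  proof
    assume "p dvd card E"
    hence "p dvd card (rcosets\<^bsub>RR\<^esub> Q) - card E" using pdvd by (simp add: dvd_diff_nat)
    hence "p dvd 1" using cE cpos by simp
    thus False using p by simp
  qed
  define Z where "Z = G\<lparr>carrier := Q\<rparr>"
  have gZ: "group Z" unfolding Z_def by (rule subgroup_imp_group[OF Q])
  have finQ: "finite Q" using fin Qc finite_subset by blast
  have "\<exists>C\<in>E. \<forall>q\<in>carrier Z. (\<lambda>q C. C #> inv q) q C = C"
  proof (rule fixpt[OF gZ])
    show "finite (carrier Z)" using finQ by (simp add: Z_def)
    show "card (carrier Z) = p ^ a" using a by (simp add: Z_def)
    show "Factorial_Ring.prime p" by (rule p)
    show "finite E" using finRC by (simp add: E_def)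
    show "\<not> p dvd card E" by (rule ndE)
    show "C #> inv g \<in> E" if g: "g \<in> carrier Z" and C: "C \<in> E" for g C
    proof -
      have gQ: "g \<in> Q" using g by (simp add: Z_def)
      have gc: "g \<in> carrier G" using gQ Qc by blast
      obtain r where r: "r \<in> R" "C = Q #> r" "C \<noteq> Q" using C by (auto simp: E_def rcs)
      have rc': "r \<in> carrier G" using r Rc by blast
      have eq: "C #> inv g = Q #> (r \<otimes> inv g)" using r coset_mult_assoc[OF Qc rc' inv_closed[OF gc]] by simp
      have inR: "r \<otimes> inv g \<in> R" using r(1) gQ QR(1) R by (meson subgroup.m_closed subgroup.m_inv_closed subsetD)
      have "Q #> (r \<otimes> inv g) \<noteq> Q"
      proof
        assume h: "Q #> (r \<otimes> inv g) = Q"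
        have "Q #> (r \<otimes> inv g) #> g = Q #> ((r \<otimes> inv g) \<otimes> g)"
          using coset_mult_assoc[OF Qc] rc' gc by simp
        also have "(r \<otimes> inv g) \<otimes> g = r" using rc' gc by (simp add: m_assoc)
        finally have "Q #> r = Q #> g" using h by simp
        also have "\<dots> = Q" using coset_join2[OF gc Q gQ] .
        finally show False using r by simp
      qed
      thus ?thesis using eq inR by (auto simp: E_def rcs)
    qed
    show "C #> inv \<one>\<^bsub>Z\<^esub> = C" if C: "C \<in> E" for C
    proof -
      obtain r where r: "r \<in> R" "C = Q #> r" using C by (auto simp: E_def rcs)
      have "C \<subseteq> carrier G" using r Rc r_coset_subset_G[OF Qc] by blast
      thus ?thesis by (simp add: Z_def)
    qed
    show "C #> inv (g \<otimes>\<^bsub>Z\<^esub> h) = C #> inv h #> inv g"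
      if g: "g \<in> carrier Z" and h: "h \<in> carrier Z" and C: "C \<in> E" for g h C
    proof -
      have gc: "g \<in> carrier G" "h \<in> carrier G" using g h Qc by (auto simp: Z_def)
      obtain r where r: "r \<in> R" "C = Q #> r" using C by (auto simp: E_def rcs)
      have Cc: "C \<subseteq> carrier G" using r Rc r_coset_subset_G[OF Qc] by blast
      have "C #> inv h #> inv g = C #> (inv h \<otimes> inv g)"
        using coset_mult_assoc[OF Cc] gc by simp
      thus ?thesis using gc by (simp add: Z_def inv_mult_group)
    qed
  qed
  then obtain C where C: "C \<in> E" and fx: "\<And>q. q \<in> Q \<Longrightarrow> C #> inv q = C" by (auto simp: Z_def)
  obtain r where r: "r \<in> R" "C = Q #> r" "C \<noteq> Q" using C by (auto simp: E_def rcs)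
  have rc': "r \<in> carrier G" using r Rc by blast
  have rQ: "r \<notin> Q" using r coset_join2[OF rc' Q] by blast
  have "cj G r q \<in> Q" if q: "q \<in> Q" for q
  proof -
    have qc: "q \<in> carrier G" using q Qc by blast
    have "Q #> r #> inv (inv q) = Q #> r" using fx[of "inv q"] q r Q by (simp add: subgroup.m_inv_closed)
    hence e: "Q #> (r \<otimes> q) = Q #> r" using coset_mult_assoc[OF Qc rc' inv_closed[OF inv_closed[OF qc]]] qc by simp
    have "r \<otimes> q \<in> Q #> (r \<otimes> q)" using rcos_self[OF m_closed[OF rc' qc] Q] .
    hence "r \<otimes> q \<in> Q #> r" using e by simp
    hence "r \<otimes> q \<otimes> inv r \<in> Q" using subgroup.rcos_module_imp[OF Q is_group rc'] by blast
    thus ?thesis by (simp add: cj_def)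
  qed
  thus ?thesis using r(1) rQ by blast
qed

context fsys begin

lemma centS_anti: "A \<subseteq> B \<Longrightarrow> centS S B \<subseteq> centS S A"
  by (auto simp: centS_def)

lemma centric_subgroup: "centric S F A \<Longrightarrow> subgroup A S"
  by (simp add: centric_def)

lemma centric_sub: "centric S F A \<Longrightarrow> centS S A \<subseteq> A"
  unfolding centric_def using F_conj_refl by blast

lemma F_conj_subgroup: "F_conj S F A B \<Longrightarrow> subgroup B S"
  unfolding F_conj_def using F_img_sub by blast

lemma centric_conj: "centric S F A \<Longrightarrow> F_conj S F A B \<Longrightarrow> centric S F B"
  unfolding centric_def using F_conj_subgroup F_conj_trans by blast

lemma centric_up: assumes A: "centric S F A" and Q: "subgroup Q S" and AQ: "A \<subseteq> Q"
  shows "centric S F Q"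
  unfolding centric_def
proof (intro conjI allI impI)
  show "subgroup Q S" by (rule Q)
  fix Q' assume "F_conj S F Q Q'"
  then obtain \<gamma> where g: "\<gamma> \<in> F Q (carrier S)" "\<gamma>`Q = Q'" unfolding F_conj_def by blast
  have As: "subgroup A S" using A centric_subgroup by blast
  have r: "restrict \<gamma> A \<in> F A (carrier S)" by (rule F_restrict[OF g(1) As AQ])
  have im: "restrict \<gamma> A ` A = \<gamma> ` A" by simp
  have "F_conj S F A (\<gamma>`A)" using F_conj_of[OF r] im by simp
  hence c: "centS S (\<gamma>`A) \<subseteq> \<gamma>`A" using A unfolding centric_def by blast
  have s: "\<gamma>`A \<subseteq> Q'" using g(2) AQ by blast
  show "centS S Q' \<subseteq> Q'" using centS_anti[OF s] c s by blast
qed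

lemma centric_fc:
  assumes fin: "finite (carrier S)" and R: "centric S F R" and HF: "\<forall>A B. H A B \<subseteq> F A B"
  shows "fully_centralized S H R"
  unfolding fully_centralized_def
proof (intro conjI allI impI)
  show "subgroup R S" using R centric_subgroup by blast
  fix Q assume "F_conj S H R Q"
  then obtain \<gamma> where gH: "\<gamma> \<in> H R (carrier S)" and gQ: "\<gamma>`R = Q" unfolding F_conj_def by blast
  have g: "\<gamma> \<in> F R (carrier S)" using gH HF by blast
  have "F_conj S F R Q" using F_conj_of[OF g] gQ by simp
  hence cQ: "centS S Q \<subseteq> Q" using R unfolding centric_def by blast
  have Rs: "subgroup R S" using R centric_subgroup by blast
  have sub: "centS S Q \<subseteq> \<gamma> ` centS S R"
  proof
    fix c assume c: "c \<in> centS S Q"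
    have "c \<in> \<gamma>`R" using c cQ gQ by (simp add: subset_iff)
    then obtain r where r: "r \<in> R" "c = \<gamma> r" by blast
    have rc: "r \<in> carrier S" by (rule subgroup.mem_carrier[OF Rs r(1)])
    have "r \<otimes> x = x \<otimes> r" if x: "x \<in> R" for x
    proof -
      have xc: "x \<in> carrier S" by (rule subgroup.mem_carrier[OF Rs x])
      have "\<gamma> (r \<otimes> x) = \<gamma> r \<otimes> \<gamma> x" using F_hom[OF g r(1) x] .
      also have "\<dots> = \<gamma> x \<otimes> \<gamma> r"
      proof -
        have "\<gamma> x \<in> \<gamma>`R" by (rule imageI[OF x])
        hence "\<gamma> x \<in> Q" by (simp only: gQ)
        thus ?thesis using c r(2) unfolding centS_def by simp
      qed
      also have "\<dots> = \<gamma> (x \<otimes> r)" using F_hom[OF g x r(1)] by simp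
      finally have "\<gamma> (r \<otimes> x) = \<gamma> (x \<otimes> r)" .
      moreover have "r \<otimes> x \<in> R" "x \<otimes> r \<in> R" using subgroup.m_closed[OF Rs r(1) x] subgroup.m_closed[OF Rs x r(1)] by simp_all
      ultimately show ?thesis using inj_onD[OF F_inj[OF g]] by simp
    qed
    hence "r \<in> centS S R" using rc unfolding centS_def by blast
    thus "c \<in> \<gamma> ` centS S R" using r by blast
  qed
  have "finite (centS S R)" using fin unfolding centS_def by simp
  hence "card (\<gamma> ` centS S R) \<le> card (centS S R)" by (rule card_image_le)
  moreover have "card (centS S Q) \<le> card (\<gamma> ` centS S R)"
    using card_mono[OF finite_imageI[OF \<open>finite (centS S R)\<close>] sub] .
  ultimately show "card (centS S Q) \<le> card (centS S R)" by simp
qed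

lemma F_inv_apply: "\<phi> \<in> F A B \<Longrightarrow> x \<in> A \<Longrightarrow> restrict (inv_into A \<phi>) (\<phi>`A) (\<phi> x) = x"
  using F_inj by (simp add: inv_into_f_f)

lemma F_apply_inv: "\<phi> \<in> F A B \<Longrightarrow> y \<in> \<phi>`A \<Longrightarrow> \<phi> (restrict (inv_into A \<phi>) (\<phi>`A) y) = y"
  by (simp add: f_inv_into_f)

lemma F_endo_bij: "finite (carrier S) \<Longrightarrow> \<phi> \<in> F A B \<Longrightarrow> \<phi>`A \<subseteq> A \<Longrightarrow> \<phi>`A = A"
  by (meson F_dom_carrier F_inj endo_inj_surj finite_subset subsetI)

end

context fsys begin

lemma restrict_cj_one: "subgroup Q S \<Longrightarrow> restrict (cj S \<one>) Q = (\<lambda>x\<in>Q. x)"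
proof
  fix x assume Q: "subgroup Q S"
  show "restrict (cj S \<one>) Q x = (\<lambda>x\<in>Q. x) x"
    by (cases "x \<in> Q") (simp_all add: cj_one subgroup.mem_carrier[OF Q])
qed

lemma idQ_in: "subgroup Q S \<Longrightarrow> (\<lambda>x\<in>Q. x) \<in> F Q Q"
  using incl_in[of Q Q] restrict_cj_one by simp

lemma F_Bij: assumes fin: "finite (carrier S)" and f: "\<phi> \<in> F Q Q" shows "\<phi> \<in> Bij Q"
proof -
  have Q: "subgroup Q S" using F_sub[OF f] by simp
  have finQ: "finite Q" using fin subgroup.subset[OF Q] finite_subset by blast
  have im: "\<phi>`Q \<subseteq> Q" using F_into[OF f] by blast
  have "\<phi>`Q = Q" using endo_inj_surj[OF finQ im F_inj[OF f]] .
  hence "bij_betw \<phi> Q Q" using F_inj[OF f] by (simp add: bij_betw_def)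
  thus ?thesis using F_ext[OF f] by (simp add: Bij_def)
qed

lemma FQQ_subgroup: assumes fin: "finite (carrier S)" and Q: "subgroup Q S"
  shows "subgroup (F Q Q) (BijGroup Q)"
proof (rule group.subgroupI[OF group_BijGroup])
  show "F Q Q \<subseteq> carrier (BijGroup Q)" using F_Bij[OF fin] by (auto simp: BijGroup_def)
  show "F Q Q \<noteq> {}" using idQ_in[OF Q] by blast
  show "inv\<^bsub>BijGroup Q\<^esub> a \<in> F Q Q" if a: "a \<in> F Q Q" for a
  proof -
    have b: "a \<in> Bij Q" by (rule F_Bij[OF fin a])
    have e: "a`Q = Q" using b by (simp add: Bij_def bij_betw_def)
    have "restrict (inv_into Q a) (a`Q) \<in> F (a`Q) Q" by (rule F_inv[OF a])
    thus ?thesis using inv_BijGroup[OF b] e by simp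
  qed
  show "a \<otimes>\<^bsub>BijGroup Q\<^esub> b \<in> F Q Q" if a: "a \<in> F Q Q" and b: "b \<in> F Q Q" for a b
  proof -
    have "a \<otimes>\<^bsub>BijGroup Q\<^esub> b = compose Q a b" using F_Bij[OF fin a] F_Bij[OF fin b] by (simp add: BijGroup_def)
    thus ?thesis using F_comp[OF b a] by simp
  qed
qed

end

locale satsys = fsys +
  fixes p :: nat
  assumes sat: "saturated p S F"
begin

lemma pgrp: "is_p_group p S" using sat by (simp add: saturated_def)
lemma fin: "finite (carrier S)" using pgrp by (simp add: is_p_group_def)
lemma pprime: "Factorial_Ring.prime p" using pgrp by (simp add: is_p_group_def)
lemma pcard: "\<exists>n. card (carrier S) = p ^ n" using pgrp by (simp add: is_p_group_def)

lemma sylow_ax: "fully_normalized S F Q \<Longrightarrow>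
   \<exists>m. card (F Q Q) = card (HomT S (carrier S) Q Q) * m \<and> \<not> p dvd m"
  using sat unfolding saturated_def by (elim conjE) blast

lemma d_central:
  assumes R: "subgroup R S" and Q: "subgroup Q S" and RQ: "R \<subseteq> Q"
    and norm: "\<And>g r. g \<in> Q \<Longrightarrow> r \<in> R \<Longrightarrow> cj S g r \<in> R"
    and cen: "centric S F R" and \<alpha>: "\<alpha> \<in> F Q B" and fx: "\<And>r. r \<in> R \<Longrightarrow> \<alpha> r = r"
    and x: "x \<in> Q"
  shows "\<alpha> x \<otimes> inv x \<in> R" "\<forall>r\<in>R. (\<alpha> x \<otimes> inv x) \<otimes> r = r \<otimes> (\<alpha> x \<otimes> inv x)"
proof -
  have xc: "x \<in> carrier S" by (rule subgroup.mem_carrier[OF Q x])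
  have ax: "\<alpha> x \<in> carrier S" by (rule F_carrier[OF \<alpha> x])
  have dc: "\<alpha> x \<otimes> inv x \<in> carrier S" using xc ax by simp
  have ix: "inv x \<in> Q" by (rule subgroup.m_inv_closed[OF Q x])
  have com: "\<forall>r\<in>R. (\<alpha> x \<otimes> inv x) \<otimes> r = r \<otimes> (\<alpha> x \<otimes> inv x)"
  proof
    fix r assume r: "r \<in> R"
    have rc: "r \<in> carrier S" by (rule subgroup.mem_carrier[OF R r])
    define r1 where "r1 = cj S (inv x) r"
    have r1R: "r1 \<in> R" unfolding r1_def by (rule norm[OF ix r])
    have r1Q: "r1 \<in> Q" using r1R RQ by (simp add: subset_iff)
    have e1: "cj S x r1 = r" unfolding r1_def using cj_inv2[OF xc rc] .
    have "\<alpha> (cj S x r1) = cj S (\<alpha> x) (\<alpha> r1)" by (rule F_cj[OF \<alpha> x r1Q])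
    hence "cj S (\<alpha> x) r1 = r" using e1 fx[OF r] fx[OF r1R] by simp
    hence "cj S (\<alpha> x \<otimes> inv x) r = r"
      using cj_mult[OF ax inv_closed[OF xc] rc] unfolding r1_def by simp
    thus "(\<alpha> x \<otimes> inv x) \<otimes> r = r \<otimes> (\<alpha> x \<otimes> inv x)" using cj_comm_iff[OF dc rc] by simp
  qed
  thus "\<forall>r\<in>R. (\<alpha> x \<otimes> inv x) \<otimes> r = r \<otimes> (\<alpha> x \<otimes> inv x)" .
  have "\<alpha> x \<otimes> inv x \<in> centS S R" using com dc unfolding centS_def by simp
  thus "\<alpha> x \<otimes> inv x \<in> R" using centric_sub[OF cen] by (simp add: subset_iff)
qed

end

context satsys begin

lemma FQQ_finite: assumes Q: "subgroup Q S" shows "finite (F Q Q)"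
proof -
  have finQ: "finite Q" by (rule finite_subset[OF subgroup.subset[OF Q] fin])
  have "F Q Q \<subseteq> Q \<rightarrow>\<^sub>E Q"
  proof (rule subsetI)
    fix f assume f: "f \<in> F Q Q"
    show "f \<in> Q \<rightarrow>\<^sub>E Q"
    proof (rule PiE_I)
      show "f x \<in> Q" if "x \<in> Q" for x by (rule F_into[OF f that])
      show "f x = undefined" if "x \<notin> Q" for x by (rule extensional_arb[OF F_ext[OF f] that])
    qed
  qed
  moreover have "finite (Q \<rightarrow>\<^sub>E Q)" by (intro finite_PiE finQ)
  ultimately show ?thesis by (rule finite_subset)
qed

lemma A8fn:
  assumes fn: "fully_normalized S F Q" and R: "subgroup R S" and RQ: "R \<subseteq> Q"
    and norm: "\<And>g r. g \<in> Q \<Longrightarrow> r \<in> R \<Longrightarrow> cj S g r \<in> R"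
    and cen: "centric S F R" and \<alpha>: "\<alpha> \<in> F Q (carrier S)" and fx: "\<And>r. r \<in> R \<Longrightarrow> \<alpha> r = r"
  shows "\<exists>w\<in>R. \<forall>x\<in>Q. \<alpha> x = cj S w x"
proof -
  have Q: "subgroup Q S" using fn by (simp add: fully_normalized_def)
  define d where "d x = \<alpha> x \<otimes> inv x" for x
  have dR: "d x \<in> R" if x: "x \<in> Q" for x
    using d_central(1)[OF R Q RQ norm cen \<alpha> fx x] unfolding d_def .
  have xc: "x \<in> carrier S" if x: "x \<in> Q" for x by (rule subgroup.mem_carrier[OF Q x])
  have dQ: "d x \<in> Q" if x: "x \<in> Q" for x using dR[OF x] RQ by (simp add: subset_iff)
  have dc: "d x \<in> carrier S" if x: "x \<in> Q" for x by (rule xc[OF dQ[OF x]])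
  have \<alpha>d: "\<alpha> x = d x \<otimes> x" if x: "x \<in> Q" for x
    unfolding d_def using inv_cancel_r[OF xc[OF x] F_carrier[OF \<alpha> x]] by simp
  have \<alpha>Q: "\<alpha> x \<in> Q" if x: "x \<in> Q" for x
    using \<alpha>d[OF x] subgroup.m_closed[OF Q dQ[OF x] x] by simp
  have \<alpha>2: "\<alpha> \<in> F Q Q" by (rule F_enlarge[OF \<alpha> Q]) (use \<alpha>Q in blast)
  have dd: "d (\<alpha> x) = d x" if x: "x \<in> Q" for x
  proof -
    have "\<alpha> (\<alpha> x) = \<alpha> (d x \<otimes> x)" using \<alpha>d[OF x] by simp
    also have "\<dots> = \<alpha> (d x) \<otimes> \<alpha> x" by (rule F_hom[OF \<alpha> dQ[OF x] x])
    also have "\<dots> = d x \<otimes> \<alpha> x" using fx[OF dR[OF x]] by simp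
    finally have "\<alpha> (\<alpha> x) = d x \<otimes> \<alpha> x" .
    thus ?thesis unfolding d_def[of "\<alpha> x"]
      using inv_cancel_r2[OF F_carrier[OF \<alpha> x] dc[OF x]] by simp
  qed
  define G where "G = (BijGroup Q)\<lparr>carrier := F Q Q\<rparr>"
  have gG: "group G" unfolding G_def
    by (rule group.subgroup_imp_group[OF group_BijGroup FQQ_subgroup[OF fin Q]])
  interpret G: group G by (rule gG)
  have cG: "carrier G = F Q Q" by (simp add: G_def)
  have mG: "f \<otimes>\<^bsub>G\<^esub> g = compose Q f g" if "f \<in> F Q Q" "g \<in> F Q Q" for f g
    using F_Bij[OF fin that(1)] F_Bij[OF fin that(2)] by (simp add: G_def BijGroup_def)
  have oG: "\<one>\<^bsub>G\<^esub> = (\<lambda>x\<in>Q. x)" by (simp add: G_def BijGroup_def)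
  have \<alpha>G: "\<alpha> \<in> carrier G" using \<alpha>2 cG by simp
  have pw: "(\<alpha> [^]\<^bsub>G\<^esub> k) x = d x [^] k \<otimes> x" if x: "x \<in> Q" for k :: nat and x
    using x
  proof (induction k arbitrary: x)
    case 0
    thus ?case using oG xc[OF 0] by simp
  next
    case (Suc k)
    have pk: "\<alpha> [^]\<^bsub>G\<^esub> k \<in> F Q Q" using G.nat_pow_closed[OF \<alpha>G] cG by simp
    have "(\<alpha> [^]\<^bsub>G\<^esub> Suc k) x = compose Q (\<alpha> [^]\<^bsub>G\<^esub> k) \<alpha> x"
      using mG[OF pk \<alpha>2] by simp
    also have "\<dots> = (\<alpha> [^]\<^bsub>G\<^esub> k) (\<alpha> x)" using Suc.prems by (simp add: compose_def)
    also have "\<dots> = d (\<alpha> x) [^] k \<otimes> \<alpha> x" using Suc.IH[OF \<alpha>Q[OF Suc.prems]] .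
    also have "\<dots> = d x [^] k \<otimes> (d x \<otimes> x)" using dd[OF Suc.prems] \<alpha>d[OF Suc.prems] by simp
    also have "\<dots> = d x [^] Suc k \<otimes> x"
      using dc[OF Suc.prems] xc[OF Suc.prems] by (simp add: m_assoc)
    finally show ?case .
  qed
  obtain n where cS: "card (carrier S) = p ^ n" using pcard by blast
  define N where "N = p * card (carrier S)"
  have N: "N = p ^ Suc n" unfolding N_def cS by simp
  have p2: "p \<ge> 2" using pprime by (simp add: prime_ge_2_nat)
  have pn1: "1 \<le> p ^ n" by (rule one_le_power) (use p2 in simp)
  have Nge: "N \<ge> 2" using mult_le_mono[OF p2 pn1] N by simp
  have \<alpha>N: "\<alpha> [^]\<^bsub>G\<^esub> N = \<one>\<^bsub>G\<^esub>"
  proof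
    fix x
    show "(\<alpha> [^]\<^bsub>G\<^esub> N) x = \<one>\<^bsub>G\<^esub> x"
    proof (cases "x \<in> Q")
      case True
      have "d x [^] N = (d x [^] order S) [^] p"
        unfolding N_def order_def using nat_pow_pow[OF dc[OF True]] by (simp add: mult.commute)
      also have "\<dots> = \<one>" using pow_order_eq_1[OF dc[OF True]] by simp
      finally show ?thesis using pw[OF True] oG True xc[OF True] by simp
    next
      case False
      have "\<alpha> [^]\<^bsub>G\<^esub> N \<in> F Q Q" using G.nat_pow_closed[OF \<alpha>G] cG by simp
      hence "(\<alpha> [^]\<^bsub>G\<^esub> N) x = undefined" using F_ext False extensional_arb by metis
      thus ?thesis using oG False by simp
    qed
  qed
  have pmod: "\<alpha> [^]\<^bsub>G\<^esub> k = \<alpha> [^]\<^bsub>G\<^esub> (k mod N)" for k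
  proof -
    have "\<alpha> [^]\<^bsub>G\<^esub> k = \<alpha> [^]\<^bsub>G\<^esub> (N * (k div N) + k mod N)" by simp
    also have "\<dots> = (\<alpha> [^]\<^bsub>G\<^esub> N) [^]\<^bsub>G\<^esub> (k div N) \<otimes>\<^bsub>G\<^esub> \<alpha> [^]\<^bsub>G\<^esub> (k mod N)"
      using G.nat_pow_mult[OF \<alpha>G] G.nat_pow_pow[OF \<alpha>G] by simp
    also have "\<dots> = \<alpha> [^]\<^bsub>G\<^esub> (k mod N)" using \<alpha>N G.nat_pow_closed[OF \<alpha>G] by simp
    finally show ?thesis .
  qed
  define T where "T = HomT S (carrier S) Q Q"
  have Tmem: "t \<in> T \<longleftrightarrow> (\<exists>g. g \<in> carrier S \<and> cj S g ` Q \<subseteq> Q \<and> t = restrict (cj S g) Q)" for t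
    unfolding T_def HomT_def by blast
  have TE: "\<exists>g. g \<in> carrier S \<and> cj S g ` Q \<subseteq> Q \<and> t = restrict (cj S g) Q" if "t \<in> T" for t
    using Tmem that by simp
  have TI: "restrict (cj S g) Q \<in> T" if "g \<in> carrier S" "cj S g ` Q \<subseteq> Q" for g
    unfolding T_def HomT_def using that by blast
  have TF: "T \<subseteq> F Q Q"
  proof (rule subsetI)
    fix t assume t: "t \<in> T"
    obtain g where g: "g \<in> carrier S" "cj S g ` Q \<subseteq> Q" "t = restrict (cj S g) Q" using TE[OF t] by blast
    show "t \<in> F Q Q" using HomT_in[OF Q Q g(1) g(2)] g(3) by simp
  qed
  have subT: "subgroup T G"
  proof (rule G.subgroupI)
    show "T \<subseteq> carrier G" using TF cG by simp
    have "cj S \<one> ` Q \<subseteq> Q"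
    proof (rule subsetI)
      fix z assume "z \<in> cj S \<one> ` Q"
      then obtain x where x: "x \<in> Q" "z = cj S \<one> x" by blast
      thus "z \<in> Q" using cj_one[OF xc[OF x(1)]] by simp
    qed
    hence "restrict (cj S \<one>) Q \<in> T" using TI[OF one_closed] by simp
    thus "T \<noteq> {}" by blast
    show "inv\<^bsub>G\<^esub> a \<in> T" if a: "a \<in> T" for a
    proof -
      obtain g where g: "g \<in> carrier S" "cj S g ` Q \<subseteq> Q" "a = restrict (cj S g) Q" using TE[OF a] by blast
      have aF: "a \<in> F Q Q" using a TF by blast
      have aQ: "a ` Q = Q" using F_endo_bij[OF fin aF] F_into[OF aF] by blast
      have ig: "cj S (inv g) ` Q \<subseteq> Q"
      proof
        fix z assume "z \<in> cj S (inv g) ` Q"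
        then obtain y where y: "y \<in> Q" "z = cj S (inv g) y" by blast
        have "y \<in> a ` Q" using aQ y(1) by simp
        then obtain x where x: "x \<in> Q" "y = a x" by blast
        have "z = x" using y x g(3) cj_inv[OF g(1) xc[OF x(1)]] by simp
        thus "z \<in> Q" using x by simp
      qed
      define b where "b = restrict (cj S (inv g)) Q"
      have bT: "b \<in> T" unfolding b_def using TI[OF inv_closed[OF g(1)] ig] .
      have bF: "b \<in> F Q Q" using bT TF by blast
      have "b \<otimes>\<^bsub>G\<^esub> a = \<one>\<^bsub>G\<^esub>"
      proof -
        have "compose Q b a = (\<lambda>x\<in>Q. x)"
        proof
          fix x show "compose Q b a x = (\<lambda>x\<in>Q. x) x"
          proof (cases "x \<in> Q")
            case True
            have "cj S g x \<in> Q" using g(2) True by blast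
            thus ?thesis using True g(3) cj_inv[OF g(1) xc[OF True]] by (simp add: compose_def b_def)
          qed (simp add: compose_def)
        qed
        thus ?thesis using mG[OF bF aF] oG by simp
      qed
      hence "inv\<^bsub>G\<^esub> a = b" using G.inv_equality aF bF cG by simp
      thus ?thesis using bT by simp
    qed
    show "a \<otimes>\<^bsub>G\<^esub> b \<in> T" if a: "a \<in> T" and b: "b \<in> T" for a b
    proof -
      obtain g where g: "g \<in> carrier S" "cj S g ` Q \<subseteq> Q" "a = restrict (cj S g) Q" using TE[OF a] by blast
      obtain h where h: "h \<in> carrier S" "cj S h ` Q \<subseteq> Q" "b = restrict (cj S h) Q" using TE[OF b] by blast
      have aF: "a \<in> F Q Q" using a TF by blast
      have bF: "b \<in> F Q Q" using b TF by blast
      have e: "compose Q a b = restrict (cj S (g \<otimes> h)) Q"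
      proof
        fix x show "compose Q a b x = restrict (cj S (g \<otimes> h)) Q x"
        proof (cases "x \<in> Q")
          case True
          have "cj S h x \<in> Q" using h(2) True by blast
          thus ?thesis using True g(3) h(3) cj_mult[OF g(1) h(1) xc[OF True]] by (simp add: compose_def)
        qed (simp add: compose_def)
      qed
      have "cj S (g \<otimes> h) ` Q \<subseteq> Q"
      proof
        fix z assume "z \<in> cj S (g \<otimes> h) ` Q"
        then obtain x where x: "x \<in> Q" "z = cj S (g \<otimes> h) x" by blast
        have "cj S h x \<in> Q" using h(2) x(1) by blast
        hence "cj S g (cj S h x) \<in> Q" using g(2) by blast
        thus "z \<in> Q" using x cj_mult[OF g(1) h(1) xc[OF x(1)]] by simp
      qed
      hence "restrict (cj S (g \<otimes> h)) Q \<in> T" using TI[OF m_closed[OF g(1) h(1)]] by simp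
      thus ?thesis using mG[OF aF bF] e by simp
    qed
  qed
  obtain m where m: "card (F Q Q) = card T * m" "\<not> p dvd m" using sylow_ax[OF fn] unfolding T_def by blast
  have lag: "card (rcosets\<^bsub>G\<^esub> T) * card T = card (F Q Q)"
    using G.lagrange[OF subT] cG by (simp add: order_def)
  have finT: "finite T" using FQQ_finite[OF Q] TF finite_subset by blast
  have Tne: "T \<noteq> {}" using subgroup.one_closed[OF subT] by blast
  have cT: "card T > 0" using finT Tne by (simp add: card_gt_0_iff)
  have cE: "card (rcosets\<^bsub>G\<^esub> T) = m" using lag m(1) cT by (simp add: mult.commute)
  have m0: "m \<noteq> 0" proof assume "m = 0" thus False using m(2) by simp qed
  have finE: "finite (rcosets\<^bsub>G\<^esub> T)" using cE m0 card.infinite by force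
  have TcG: "T \<subseteq> carrier G" using subgroup.subset[OF subT] .
  have rc_sub: "C \<subseteq> carrier G" if C: "C \<in> rcosets\<^bsub>G\<^esub> T" for C
    using C TcG G.r_coset_subset_G unfolding RCOSETS_def by blast
  define Z where "Z = integer_mod_group N"
  have cZ: "carrier Z = {0..<int N}" using Nge by (simp add: Z_def carrier_integer_mod_group)
  have "\<exists>C\<in>rcosets\<^bsub>G\<^esub> T. \<forall>i\<in>carrier Z. (\<lambda>i C. C #>\<^bsub>G\<^esub> (\<alpha> [^]\<^bsub>G\<^esub> nat i)) i C = C"
  proof (rule fixpt[where p = p and k = "Suc n"])
    show "group Z" by (simp add: Z_def)
    show "finite (carrier Z)" using cZ by simp
    have "card (carrier Z) = N" unfolding cZ by simp
    thus "card (carrier Z) = p ^ Suc n" using N by simp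
    show "Factorial_Ring.prime p" by (rule pprime)
    show "finite (rcosets\<^bsub>G\<^esub> T)" by (rule finE)
    show "\<not> p dvd card (rcosets\<^bsub>G\<^esub> T)" using cE m(2) by simp
    show "C #>\<^bsub>G\<^esub> (\<alpha> [^]\<^bsub>G\<^esub> nat i) \<in> rcosets\<^bsub>G\<^esub> T" if iZ: "i \<in> carrier Z" and CE: "C \<in> rcosets\<^bsub>G\<^esub> T" for i C
    proof -
      obtain \<beta> where b: "\<beta> \<in> carrier G" "C = T #>\<^bsub>G\<^esub> \<beta>" using CE unfolding RCOSETS_def by blast
      have pc: "\<alpha> [^]\<^bsub>G\<^esub> nat i \<in> carrier G" by (rule G.nat_pow_closed[OF \<alpha>G])
      have "C #>\<^bsub>G\<^esub> (\<alpha> [^]\<^bsub>G\<^esub> nat i) = T #>\<^bsub>G\<^esub> (\<beta> \<otimes>\<^bsub>G\<^esub> \<alpha> [^]\<^bsub>G\<^esub> nat i)"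
        using G.coset_mult_assoc[OF TcG b(1) pc] b(2) by simp
      thus ?thesis using G.rcosetsI[OF TcG G.m_closed[OF b(1) pc]] by simp
    qed
    show "C #>\<^bsub>G\<^esub> (\<alpha> [^]\<^bsub>G\<^esub> nat \<one>\<^bsub>Z\<^esub>) = C" if "C \<in> rcosets\<^bsub>G\<^esub> T" for C
      using G.coset_mult_one[OF rc_sub[OF that]] by (simp add: Z_def)
    show "C #>\<^bsub>G\<^esub> (\<alpha> [^]\<^bsub>G\<^esub> nat (i \<otimes>\<^bsub>Z\<^esub> j)) = C #>\<^bsub>G\<^esub> (\<alpha> [^]\<^bsub>G\<^esub> nat j) #>\<^bsub>G\<^esub> (\<alpha> [^]\<^bsub>G\<^esub> nat i)"
      if ij: "i \<in> carrier Z" "j \<in> carrier Z" and C: "C \<in> rcosets\<^bsub>G\<^esub> T" for i j C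
    proof -
      have i0: "0 \<le> i" "0 \<le> j" using ij cZ by auto
      have "nat (i \<otimes>\<^bsub>Z\<^esub> j) = (nat i + nat j) mod N"
        using i0 by (simp add: Z_def nat_mod_distrib nat_add_distrib)
      hence "\<alpha> [^]\<^bsub>G\<^esub> nat (i \<otimes>\<^bsub>Z\<^esub> j) = \<alpha> [^]\<^bsub>G\<^esub> (nat j + nat i)" using pmod by (simp add: add.commute)
      also have "\<dots> = \<alpha> [^]\<^bsub>G\<^esub> nat j \<otimes>\<^bsub>G\<^esub> \<alpha> [^]\<^bsub>G\<^esub> nat i" using G.nat_pow_mult[OF \<alpha>G] by simp
      finally show ?thesis
        using G.coset_mult_assoc[OF rc_sub[OF C] G.nat_pow_closed[OF \<alpha>G] G.nat_pow_closed[OF \<alpha>G]] by simp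
    qed
  qed
  then obtain C where C: "C \<in> rcosets\<^bsub>G\<^esub> T" and fxC: "\<And>i. i \<in> carrier Z \<Longrightarrow> C #>\<^bsub>G\<^esub> (\<alpha> [^]\<^bsub>G\<^esub> nat i) = C"
    by blast
  have "1 \<in> carrier Z" using cZ Nge by simp
  hence C1: "C #>\<^bsub>G\<^esub> \<alpha> = C" using fxC[of 1] \<alpha>G by simp
  obtain \<beta> where b: "\<beta> \<in> carrier G" "C = T #>\<^bsub>G\<^esub> \<beta>" using C unfolding RCOSETS_def by blast
  have "T #>\<^bsub>G\<^esub> (\<beta> \<otimes>\<^bsub>G\<^esub> \<alpha>) = T #>\<^bsub>G\<^esub> \<beta>"
    using C1 b G.coset_mult_assoc[OF TcG b(1) \<alpha>G] by simp
  moreover have "\<beta> \<otimes>\<^bsub>G\<^esub> \<alpha> \<in> T #>\<^bsub>G\<^esub> (\<beta> \<otimes>\<^bsub>G\<^esub> \<alpha>)" by (rule G.rcos_self[OF G.m_closed[OF b(1) \<alpha>G] subT])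
  ultimately have "\<beta> \<otimes>\<^bsub>G\<^esub> \<alpha> \<in> T #>\<^bsub>G\<^esub> \<beta>" by simp
  hence tauT: "\<beta> \<otimes>\<^bsub>G\<^esub> \<alpha> \<otimes>\<^bsub>G\<^esub> inv\<^bsub>G\<^esub> \<beta> \<in> T"
    using subgroup.rcos_module_imp[OF subT gG b(1)] by blast
  define \<tau> where "\<tau> = \<beta> \<otimes>\<^bsub>G\<^esub> \<alpha> \<otimes>\<^bsub>G\<^esub> inv\<^bsub>G\<^esub> \<beta>"
  obtain g where g: "g \<in> carrier S" "cj S g ` Q \<subseteq> Q" "\<tau> = restrict (cj S g) Q"
    using TE[OF tauT] unfolding \<tau>_def by blast
  have \<tau>F: "\<tau> \<in> F Q Q" using tauT TF unfolding \<tau>_def by blast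
  have \<beta>F: "\<beta> \<in> F Q Q" using b(1) cG by simp
  have "\<tau> \<otimes>\<^bsub>G\<^esub> \<beta> = \<beta> \<otimes>\<^bsub>G\<^esub> \<alpha>" unfolding \<tau>_def
    using G.inv_cancel_r[OF b(1) G.m_closed[OF b(1) \<alpha>G]] .
  hence ceq: "compose Q \<tau> \<beta> = compose Q \<beta> \<alpha>" using mG[OF \<tau>F \<beta>F] mG[OF \<beta>F \<alpha>2] by simp
  have key: "cj S g (\<beta> x) = \<beta> (\<alpha> x)" if x: "x \<in> Q" for x
  proof -
    have "compose Q \<tau> \<beta> x = compose Q \<beta> \<alpha> x" using ceq by simp
    moreover have "compose Q \<tau> \<beta> x = cj S g (\<beta> x)" using x F_into[OF \<beta>F x] g(3) by (simp add: compose_def)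
    moreover have "compose Q \<beta> \<alpha> x = \<beta> (\<alpha> x)" using x by (simp add: compose_def)
    ultimately show ?thesis by simp
  qed
  have gcen: "g \<in> centS S (\<beta> ` R)"
    unfolding centS_def
  proof (intro CollectI conjI ballI)
    show "g \<in> carrier S" by (rule g(1))
    fix y assume "y \<in> \<beta> ` R"
    then obtain r where r: "r \<in> R" "y = \<beta> r" by blast
    have rQ: "r \<in> Q" using r(1) RQ by (simp add: subset_iff)
    have "cj S g y = y" using key[OF rQ] fx[OF r(1)] r(2) by simp
    thus "g \<otimes> y = y \<otimes> g" using cj_comm_iff[OF g(1) F_carrier[OF \<beta>F rQ]] r(2) by simp
  qed
  have rb: "restrict \<beta> R \<in> F R Q" by (rule F_restrict[OF \<beta>F R RQ])
  have "F_conj S F R (\<beta> ` R)" using F_conj_of[OF rb] by (simp add: image_restrict_eq)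
  hence "centS S (\<beta> ` R) \<subseteq> \<beta> ` R" using cen unfolding centric_def by blast
  hence "g \<in> \<beta> ` R" using gcen by (simp add: subset_iff)
  then obtain w where w: "w \<in> R" "g = \<beta> w" by blast
  have wQ: "w \<in> Q" using w(1) RQ by (simp add: subset_iff)
  have "\<alpha> x = cj S w x" if x: "x \<in> Q" for x
  proof -
    have "\<beta> (\<alpha> x) = cj S (\<beta> w) (\<beta> x)" using key[OF x] w(2) by simp
    also have "\<dots> = \<beta> (cj S w x)" using F_cj[OF \<beta>F wQ x] by simp
    finally have e: "\<beta> (\<alpha> x) = \<beta> (cj S w x)" .
    have cQ: "cj S w x \<in> Q" unfolding cj_def
      using subgroup.m_closed[OF Q subgroup.m_closed[OF Q wQ x] subgroup.m_inv_closed[OF Q wQ]] .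
    show ?thesis using inj_onD[OF F_inj[OF \<beta>F] e \<alpha>Q[OF x] cQ] .
  qed
  thus ?thesis using w(1) by blast
qed

end

context satsys begin

lemma alpha_into:
  assumes R: "subgroup R S" and Q: "subgroup Q S" and RQ: "R \<subseteq> Q"
    and norm: "\<And>g r. g \<in> Q \<Longrightarrow> r \<in> R \<Longrightarrow> cj S g r \<in> R"
    and cen: "centric S F R" and \<alpha>: "\<alpha> \<in> F Q (carrier S)" and fx: "\<And>r. r \<in> R \<Longrightarrow> \<alpha> r = r"
    and x: "x \<in> Q"
  shows "\<alpha> x \<in> Q"
proof -
  have dR: "\<alpha> x \<otimes> inv x \<in> R" by (rule d_central(1)[OF R Q RQ norm cen \<alpha> fx x])
  have dQ: "\<alpha> x \<otimes> inv x \<in> Q" using dR RQ by (simp add: subset_iff)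
  have xc: "x \<in> carrier S" by (rule subgroup.mem_carrier[OF Q x])
  have "\<alpha> x = (\<alpha> x \<otimes> inv x) \<otimes> x" using inv_cancel_r[OF xc F_carrier[OF \<alpha> x]] by simp
  thus ?thesis using subgroup.m_closed[OF Q dQ x] by simp
qed

lemma exists_fully_normalized:
  assumes Q: "subgroup Q S"
  shows "\<exists>Qs. F_conj S F Q Qs \<and> fully_normalized S F Qs"
proof -
  define CQ where "CQ = {Q'. F_conj S F Q Q'}"
  have "CQ \<subseteq> Pow (carrier S)"
  proof (rule subsetI)
    fix Y assume "Y \<in> CQ"
    hence "subgroup Y S" using F_conj_subgroup unfolding CQ_def by simp
    thus "Y \<in> Pow (carrier S)" using subgroup.subset by simp
  qed
  hence fCQ: "finite CQ" using fin finite_subset by (metis finite_Pow_iff)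
  have QCQ: "Q \<in> CQ" unfolding CQ_def using F_conj_refl[OF Q] by simp
  define f where "f Y = card (normS S Y)" for Y
  define M where "M = Max (f ` CQ)"
  have "M \<in> f ` CQ" unfolding M_def using fCQ QCQ by (intro Max_in) auto
  then obtain Qs where Qs: "Qs \<in> CQ" "f Qs = M" by blast
  have le: "f Y \<le> M" if "Y \<in> CQ" for Y unfolding M_def using fCQ that by simp
  have "fully_normalized S F Qs"
    unfolding fully_normalized_def
  proof (intro conjI allI impI)
    show "subgroup Qs S" using Qs(1) F_conj_subgroup unfolding CQ_def by simp
    fix Q'' assume "F_conj S F Qs Q''"
    hence "Q'' \<in> CQ" using Qs(1) F_conj_trans unfolding CQ_def by blast
    thus "card (normS S Q'') \<le> card (normS S Qs)" using le Qs(2) unfolding f_def by simp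
  qed
  thus ?thesis using Qs(1) unfolding CQ_def by blast
qed

lemma A8n:
  assumes Q: "subgroup Q S" and R: "subgroup R S" and RQ: "R \<subseteq> Q"
    and norm: "\<And>g r. g \<in> Q \<Longrightarrow> r \<in> R \<Longrightarrow> cj S g r \<in> R"
    and cen: "centric S F R" and \<alpha>: "\<alpha> \<in> F Q (carrier S)" and fx: "\<And>r. r \<in> R \<Longrightarrow> \<alpha> r = r"
  shows "\<exists>w\<in>R. \<forall>x\<in>Q. \<alpha> x = cj S w x"
proof -
  have \<alpha>Q: "\<alpha> x \<in> Q" if "x \<in> Q" for x by (rule alpha_into[OF R Q RQ norm cen \<alpha> fx that])
  have \<alpha>2: "\<alpha> \<in> F Q Q" by (rule F_enlarge[OF \<alpha> Q]) (use \<alpha>Q in blast)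
  obtain Qs where Qs: "F_conj S F Q Qs" "fully_normalized S F Qs" using exists_fully_normalized[OF Q] by blast
  obtain \<gamma> where g: "\<gamma> \<in> F Q (carrier S)" "\<gamma> ` Q = Qs" using Qs(1) unfolding F_conj_def by blast
  have g2: "\<gamma> \<in> F Q Qs" using F_img[OF g(1)] g(2) by simp
  define \<gamma>i where "\<gamma>i = restrict (inv_into Q \<gamma>) Qs"
  have gi: "\<gamma>i \<in> F Qs Q" using F_inv[OF g(1)] g(2) unfolding \<gamma>i_def by simp
  have gi_app: "\<gamma>i (\<gamma> x) = x" if "x \<in> Q" for x
    using F_inv_apply[OF g(1) that] g(2) unfolding \<gamma>i_def by simp
  define \<alpha>s where "\<alpha>s = compose Qs \<gamma> (compose Qs \<alpha> \<gamma>i)"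
  have as: "\<alpha>s \<in> F Qs (carrier S)" unfolding \<alpha>s_def by (rule F_comp[OF F_comp[OF gi \<alpha>2] g(1)])
  have as_app: "\<alpha>s (\<gamma> x) = \<gamma> (\<alpha> x)" if x: "x \<in> Q" for x
  proof -
    have "\<gamma> x \<in> Qs" using g(2) x by blast
    thus ?thesis unfolding \<alpha>s_def using gi_app[OF x] by (simp add: compose_def)
  qed
  have rg: "restrict \<gamma> R \<in> F R (carrier S)" by (rule F_restrict[OF g(1) R RQ])
  have Rs: "subgroup (\<gamma> ` R) S" using F_img_sub[OF rg] by (simp add: image_restrict_eq)
  have RsQs: "\<gamma> ` R \<subseteq> Qs" using g(2) RQ by blast
  have cens: "centric S F (\<gamma> ` R)"
    using centric_conj[OF cen F_conj_of[OF rg]] by (simp add: image_restrict_eq)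
  have "\<exists>w\<in>\<gamma> ` R. \<forall>y\<in>Qs. \<alpha>s y = cj S w y"
  proof (rule A8fn[OF Qs(2) Rs RsQs _ cens as])
    show "cj S g r \<in> \<gamma> ` R" if gr: "g \<in> Qs" "r \<in> \<gamma> ` R" for g r
    proof -
      obtain x where x: "x \<in> Q" "g = \<gamma> x" using gr(1) g(2) by blast
      obtain r0 where r0: "r0 \<in> R" "r = \<gamma> r0" using gr(2) by blast
      have r0Q: "r0 \<in> Q" using r0(1) RQ by (simp add: subset_iff)
      have "cj S g r = \<gamma> (cj S x r0)" using F_cj[OF g(1) x(1) r0Q] x(2) r0(2) by simp
      thus ?thesis using norm[OF x(1) r0(1)] by simp
    qed
    show "\<alpha>s r = r" if r: "r \<in> \<gamma> ` R" for r
    proof -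
      obtain r0 where r0: "r0 \<in> R" "r = \<gamma> r0" using r by blast
      have r0Q: "r0 \<in> Q" using r0(1) RQ by (simp add: subset_iff)
      show ?thesis using as_app[OF r0Q] fx[OF r0(1)] r0(2) by simp
    qed
  qed
  then obtain ws where ws: "ws \<in> \<gamma> ` R" "\<And>y. y \<in> Qs \<Longrightarrow> \<alpha>s y = cj S ws y" by blast
  obtain w where w: "w \<in> R" "ws = \<gamma> w" using ws(1) by blast
  have wQ: "w \<in> Q" using w(1) RQ by (simp add: subset_iff)
  have "\<alpha> x = cj S w x" if x: "x \<in> Q" for x
  proof -
    have gxQs: "\<gamma> x \<in> Qs" using g(2) x by blast
    have "\<gamma> (\<alpha> x) = \<alpha>s (\<gamma> x)" using as_app[OF x] by simp
    also have "\<dots> = cj S (\<gamma> w) (\<gamma> x)" using ws(2)[OF gxQs] w(2) by simp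
    also have "\<dots> = \<gamma> (cj S w x)" using F_cj[OF g(1) wQ x] by simp
    finally have e: "\<gamma> (\<alpha> x) = \<gamma> (cj S w x)" .
    have cQ: "cj S w x \<in> Q" unfolding cj_def
      using subgroup.m_closed[OF Q subgroup.m_closed[OF Q wQ x] subgroup.m_inv_closed[OF Q wQ]] .
    show ?thesis using inj_onD[OF F_inj[OF g(1)] e \<alpha>Q[OF x] cQ] .
  qed
  thus ?thesis using w(1) by blast
qed

end

locale two = F: satsys S F p + H: satsys S H p
  for S :: "'a monoid" (structure) and F H :: "'a fus" and p :: nat +
  assumes sub: "\<And>A B. H A B \<subseteq> F A B"
begin

lemma HF: "\<phi> \<in> H A B \<Longrightarrow> \<phi> \<in> F A B" using sub by blast

lemma part2:
  assumes P: "subgroup P S" and A: "A \<subseteq> normS S P" and B: "B \<subseteq> normS S P"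
    and cA: "centric S F A" and \<phi>F: "\<phi> \<in> normF S F P A B" and \<phi>H: "\<phi> \<in> H A B"
  shows "\<phi> \<in> normF S H P A B"
proof -
  obtain \<psi> where \<psi>: "\<psi> \<in> F (A <#> P) (B <#> P)" "\<psi> ` P = P" "\<And>x. x \<in> A \<Longrightarrow> \<psi> x = \<phi> x"
    using \<phi>F A B unfolding normF_def by (auto split: if_splits)
  define Xg where "Xg = A <#> P"
  define Yg where "Yg = B <#> P"
  have \<psi>Xg: "\<psi> \<in> F Xg Yg" using \<psi>(1) unfolding Xg_def Yg_def .
  have Xs: "subgroup Xg S" and Ys: "subgroup Yg S" using F.F_sub[OF \<psi>Xg] by auto
  have As: "subgroup A S" and Bs: "subgroup B S" using H.F_sub[OF \<phi>H] by auto
  have Ac: "A \<subseteq> carrier S" using subgroup.subset[OF As] .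
  have Pc: "P \<subseteq> carrier S" using subgroup.subset[OF P] .
  have AX: "A \<subseteq> Xg"
  proof (rule subsetI)
    fix a assume a: "a \<in> A"
    have "a \<otimes> \<one> \<in> A <#> P" unfolding set_mult_def using a subgroup.one_closed[OF P] by blast
    thus "a \<in> Xg" using subgroup.mem_carrier[OF As a] unfolding Xg_def by simp
  qed
  have PX: "P \<subseteq> Xg"
  proof (rule subsetI)
    fix x assume x: "x \<in> P"
    have "\<one> \<otimes> x \<in> A <#> P" unfolding set_mult_def using x subgroup.one_closed[OF As] by blast
    thus "x \<in> Xg" using subgroup.mem_carrier[OF P x] unfolding Xg_def by simp
  qed
  have \<phi>Fm: "\<phi> \<in> F A B" using HF[OF \<phi>H] .
  define \<Phi> where "\<Phi> = \<phi> ` A"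
  have c\<Phi>: "centric S F \<Phi>" unfolding \<Phi>_def by (rule F.centric_conj[OF cA F.F_conj_of[OF \<phi>Fm]])
  have C\<Phi>: "centS S \<Phi> \<subseteq> \<Phi>" by (rule F.centric_sub[OF c\<Phi>])
  have \<Phi>B: "\<Phi> \<subseteq> B" unfolding \<Phi>_def using F.F_into[OF \<phi>Fm] by blast
  have \<psi>c: "\<psi> x \<in> carrier S" if "x \<in> Xg" for x by (rule F.F_carrier[OF \<psi>Xg that])
  have Xc: "x \<in> carrier S" if "x \<in> Xg" for x by (rule subgroup.mem_carrier[OF Xs that])
  define Inv where "Inv Q \<longleftrightarrow> subgroup Q S \<and> A \<subseteq> Q \<and> Q \<subseteq> Xg \<and>
      (\<exists>\<chi> z. \<chi> \<in> H Q (carrier S) \<and> z \<in> centS S \<Phi> \<and> (\<forall>x\<in>Q. \<chi> x = cj S z (\<psi> x)))" for Q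
  have zfix: "cj S z y = y" if z: "z \<in> centS S \<Phi>" and y: "y \<in> \<Phi>" for z y
  proof -
    have zc: "z \<in> carrier S" using z unfolding centS_def by simp
    have yc: "y \<in> carrier S" using y \<Phi>B subgroup.mem_carrier[OF Bs] by blast
    have "z \<otimes> y = y \<otimes> z" using z y unfolding centS_def by simp
    thus ?thesis by (rule F.cj_comm[OF zc yc])
  qed
  have InvA: "Inv A"
    unfolding Inv_def
  proof (intro conjI exI)
    show "subgroup A S" by (rule As)
    show "A \<subseteq> A" by simp
    show "A \<subseteq> Xg" by (rule AX)
    show "\<phi> \<in> H A (carrier S)" using H.F_enlarge[OF \<phi>H F.subgroup_self] H.F_carrier[OF \<phi>H] by blast
    show "\<one> \<in> centS S \<Phi>" unfolding centS_def using \<Phi>B subgroup.mem_carrier[OF Bs] by auto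
    show "\<forall>x\<in>A. \<phi> x = cj S \<one> (\<psi> x)"
      using \<psi>(3) F.cj_one F.F_carrier[OF \<phi>Fm] by simp
  qed
  define Cands where "Cands = {Q. Inv Q}"
  have CP: "Cands \<subseteq> Pow (carrier S)" unfolding Cands_def Inv_def using subgroup.subset by blast
  have fC: "finite Cands" using F.fin CP finite_subset by (metis finite_Pow_iff)
  define M where "M = Max (card ` Cands)"
  have "M \<in> card ` Cands" unfolding M_def using fC InvA by (intro Max_in) (auto simp: Cands_def)
  then obtain Qm where Qm: "Inv Qm" "card Qm = M" unfolding Cands_def by blast
  have leM: "card Q \<le> M" if "Inv Q" for Q unfolding M_def using fC that by (simp add: Cands_def)
  have QmX: "Qm = Xg"
  proof (rule ccontr)
    assume ne: "Qm \<noteq> Xg"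
    have Qms: "subgroup Qm S" and AQm: "A \<subseteq> Qm" and QmsX: "Qm \<subseteq> Xg" using Qm(1) unfolding Inv_def by auto
    obtain \<chi> z where \<chi>: "\<chi> \<in> H Qm (carrier S)" and z: "z \<in> centS S \<Phi>" and \<chi>e: "\<And>x. x \<in> Qm \<Longrightarrow> \<chi> x = cj S z (\<psi> x)"
      using Qm(1) unfolding Inv_def by blast
    have zc: "z \<in> carrier S" using z unfolding centS_def by simp
    obtain n where cS: "card (carrier S) = p ^ n" using F.pcard by blast
    obtain r where r: "r \<in> Xg" "r \<notin> Qm" "\<And>q. q \<in> Qm \<Longrightarrow> cj S r q \<in> Qm"
      using F.norm_grow[OF F.fin cS F.pprime Qms Xs QmsX ne] by blast
    have finQm: "finite Qm" by (rule finite_subset[OF subgroup.subset[OF Qms] F.fin])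
    have Qmc: "q \<in> carrier S" if "q \<in> Qm" for q by (rule subgroup.mem_carrier[OF Qms that])
    define Q' where "Q' = {g \<in> Xg. \<forall>q\<in>Qm. cj S g q \<in> Qm}"
    have cjQm: "cj S g ` Qm = Qm" if g: "g \<in> Q'" for g
    proof -
      have gc: "g \<in> carrier S" using g Xc unfolding Q'_def by blast
      have sub1: "cj S g ` Qm \<subseteq> Qm" using g unfolding Q'_def by blast
      have "inj_on (cj S g) Qm"
      proof (rule inj_onI)
        fix x y assume "x \<in> Qm" "y \<in> Qm" "cj S g x = cj S g y"
        thus "x = y" using F.cj_inv[OF gc Qmc] by metis
      qed
      thus ?thesis using endo_inj_surj[OF finQm sub1] by simp
    qed
    have Q's: "subgroup Q' S"
    proof (rule F.subgroupI)
      show "Q' \<subseteq> carrier S" unfolding Q'_def using Xc by blast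
      have "\<one> \<in> Q'" unfolding Q'_def using subgroup.one_closed[OF Xs] F.cj_one Qmc by simp
      thus "Q' \<noteq> {}" by blast
      show "inv a \<in> Q'" if a: "a \<in> Q'" for a
      proof -
        have aX: "a \<in> Xg" using a unfolding Q'_def by simp
        have ac: "a \<in> carrier S" by (rule Xc[OF aX])
        have "cj S (inv a) q \<in> Qm" if q: "q \<in> Qm" for q
        proof -
          have "q \<in> cj S a ` Qm" using cjQm[OF a] q by simp
          then obtain q' where q': "q' \<in> Qm" "q = cj S a q'" by blast
          thus ?thesis using F.cj_inv[OF ac Qmc[OF q'(1)]] by simp
        qed
        thus ?thesis unfolding Q'_def using subgroup.m_inv_closed[OF Xs aX] by blast
      qed
      show "a \<otimes> b \<in> Q'" if a: "a \<in> Q'" and b: "b \<in> Q'" for a b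
      proof -
        have aX: "a \<in> Xg" and bX: "b \<in> Xg" using a b unfolding Q'_def by auto
        have "cj S (a \<otimes> b) q \<in> Qm" if q: "q \<in> Qm" for q
        proof -
          have "cj S b q \<in> Qm" using b q unfolding Q'_def by blast
          hence "cj S a (cj S b q) \<in> Qm" using a unfolding Q'_def by blast
          thus ?thesis using F.cj_mult[OF Xc[OF aX] Xc[OF bX] Qmc[OF q]] by simp
        qed
        thus ?thesis unfolding Q'_def using subgroup.m_closed[OF Xs aX bX] by blast
      qed
    qed
    have QmQ': "Qm \<subseteq> Q'"
    proof (rule subsetI)
      fix q assume q: "q \<in> Qm"
      have "cj S q q' \<in> Qm" if q': "q' \<in> Qm" for q'
        unfolding cj_def using subgroup.m_closed[OF Qms subgroup.m_closed[OF Qms q q'] subgroup.m_inv_closed[OF Qms q]] .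
      thus "q \<in> Q'" unfolding Q'_def using q QmsX by blast
    qed
    have rQ': "r \<in> Q'" unfolding Q'_def using r by blast
    have Q'Xg: "Q' \<subseteq> Xg" unfolding Q'_def by blast
    have finQ': "finite Q'" by (rule finite_subset[OF subgroup.subset[OF Q's] F.fin])
    have cardlt: "card Qm < card Q'"
      using psubset_card_mono[OF finQ'] QmQ' rQ' r(2) by blast
    have AQ': "A \<subseteq> Q'" using AQm QmQ' by blast
    define \<theta> where "\<theta> = restrict (\<lambda>x. cj S z (\<psi> x)) Q'"
    have \<theta>F: "\<theta> \<in> F Q' (carrier S)"
    proof -
      have r1: "restrict \<psi> Q' \<in> F Q' Yg" by (rule F.F_restrict[OF \<psi>Xg Q's Q'Xg])
      have r2: "restrict \<psi> Q' \<in> F Q' (carrier S)"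
        by (rule F.F_enlarge[OF r1 F.subgroup_self]) (use F.F_carrier[OF r1] in blast)
      have cz: "restrict (cj S z) (carrier S) \<in> F (carrier S) (carrier S)"
        by (rule F.HomT_in[OF F.subgroup_self F.subgroup_self zc]) (use F.cj_carrier[OF zc] in blast)
      have "compose Q' (restrict (cj S z) (carrier S)) (restrict \<psi> Q') = \<theta>"
      proof
        fix x show "compose Q' (restrict (cj S z) (carrier S)) (restrict \<psi> Q') x = \<theta> x"
        proof (cases "x \<in> Q'")
          case True
          hence "\<psi> x \<in> carrier S" using \<psi>c Q'Xg by blast
          thus ?thesis using True by (simp add: compose_def \<theta>_def)
        qed (simp add: compose_def \<theta>_def)
      qed
      thus ?thesis using F.F_comp[OF r2 cz] by simp
    qed
    have \<theta>\<chi>: "\<theta> x = \<chi> x" if "x \<in> Qm" for x using that QmQ' \<chi>e unfolding \<theta>_def by auto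
    have \<theta>A: "\<theta> a = \<phi> a" if a: "a \<in> A" for a
    proof -
      have "\<theta> a = cj S z (\<phi> a)" using a AQ' \<psi>(3) unfolding \<theta>_def by auto
      also have "\<dots> = \<phi> a" using zfix[OF z] a unfolding \<Phi>_def by blast
      finally show ?thesis .
    qed
    have cQm: "centric S F Qm" by (rule F.centric_up[OF cA Qms AQm])
    have \<chi>F: "\<chi> \<in> F Qm (carrier S)" by (rule HF[OF \<chi>])
    have c\<chi>Qm: "centric S F (\<chi> ` Qm)" by (rule F.centric_conj[OF cQm F.F_conj_of[OF \<chi>F]])
    have fc: "fully_centralized S H (\<chi> ` Qm)" by (rule F.centric_fc[OF F.fin c\<chi>Qm]) (use sub in blast)
    obtain \<chi>b where \<chi>b: "\<chi>b \<in> H (N_phi S Qm \<chi>) (carrier S)" "\<And>x. x \<in> Qm \<Longrightarrow> \<chi>b x = \<chi> x"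
      using H.sat \<chi> fc unfolding saturated_def by (elim conjE) blast
    have Q'N: "Q' \<subseteq> N_phi S Qm \<chi>"
    proof (rule subsetI)
      fix g assume g: "g \<in> Q'"
      have gX: "g \<in> Xg" using g Q'Xg by blast
      have gc: "g \<in> carrier S" by (rule Xc[OF gX])
      have gN: "g \<in> normS S Qm" unfolding normS_def using gc cjQm[OF g] by simp
      define h where "h = \<theta> g"
      have hc: "h \<in> carrier S" unfolding h_def by (rule F.F_carrier[OF \<theta>F g])
      have key: "cj S h (\<chi> q) = \<chi> (cj S g q)" if q: "q \<in> Qm" for q
      proof -
        have qQ': "q \<in> Q'" using q QmQ' by blast
        have cq: "cj S g q \<in> Qm" using g q unfolding Q'_def by blast
        have "cj S h (\<chi> q) = cj S (\<theta> g) (\<theta> q)" using \<theta>\<chi>[OF q] h_def by simp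
        also have "\<dots> = \<theta> (cj S g q)" using F.F_cj[OF \<theta>F g qQ'] by simp
        also have "\<dots> = \<chi> (cj S g q)" using \<theta>\<chi>[OF cq] .
        finally show ?thesis .
      qed
      have hN: "h \<in> normS S (\<chi> ` Qm)"
      proof -
        have "cj S h ` (\<chi> ` Qm) = (\<lambda>q. cj S h (\<chi> q)) ` Qm" by (simp add: image_image)
        also have "\<dots> = (\<lambda>q. \<chi> (cj S g q)) ` Qm" by (rule image_cong[OF refl key])
        also have "\<dots> = \<chi> ` (cj S g ` Qm)" by (simp add: image_image)
        finally have "cj S h ` (\<chi> ` Qm) = \<chi> ` (cj S g ` Qm)" .
        thus ?thesis unfolding normS_def using hc cjQm[OF g] by simp
      qed
      have "\<forall>x\<in>\<chi> ` Qm. \<chi> (cj S g (inv_into Qm \<chi> x)) = cj S h x"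
      proof
        fix x assume "x \<in> \<chi> ` Qm"
        then obtain q where q: "q \<in> Qm" "x = \<chi> q" by blast
        have "inv_into Qm \<chi> x = q" using q inv_into_f_f[OF F.F_inj[OF \<chi>F] q(1)] by simp
        thus "\<chi> (cj S g (inv_into Qm \<chi> x)) = cj S h x" using key[OF q(1)] q(2) by simp
      qed
      thus "g \<in> N_phi S Qm \<chi>" unfolding N_phi_def using gN hN by blast
    qed
    define \<chi>' where "\<chi>' = restrict \<chi>b Q'"
    have \<chi>'H: "\<chi>' \<in> H Q' (carrier S)" unfolding \<chi>'_def by (rule H.F_restrict[OF \<chi>b(1) Q's Q'N])
    have \<chi>'F: "\<chi>' \<in> F Q' (carrier S)" by (rule HF[OF \<chi>'H])
    have \<chi>'Qm: "\<chi>' q = \<theta> q" if "q \<in> Qm" for q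
      using that QmQ' \<chi>b(2) \<theta>\<chi> unfolding \<chi>'_def by auto
    define \<theta>i where "\<theta>i = restrict (inv_into Q' \<theta>) (\<theta> ` Q')"
    have \<theta>i: "\<theta>i \<in> F (\<theta> ` Q') Q'" unfolding \<theta>i_def by (rule F.F_inv[OF \<theta>F])
    have \<theta>i_app: "\<theta>i (\<theta> x) = x" if "x \<in> Q'" for x unfolding \<theta>i_def by (rule F.F_inv_apply[OF \<theta>F that])
    define \<alpha>0 where "\<alpha>0 = compose (\<theta> ` Q') \<chi>' \<theta>i"
    have \<alpha>0F: "\<alpha>0 \<in> F (\<theta> ` Q') (carrier S)" unfolding \<alpha>0_def by (rule F.F_comp[OF \<theta>i \<chi>'F])
    have \<alpha>0_app: "\<alpha>0 (\<theta> x) = \<chi>' x" if x: "x \<in> Q'" for x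
      unfolding \<alpha>0_def using x \<theta>i_app[OF x] by (simp add: compose_def)
    have r\<theta>: "restrict \<theta> Qm \<in> F Qm (carrier S)" by (rule F.F_restrict[OF \<theta>F Qms QmQ'])
    have R0s: "subgroup (\<theta> ` Qm) S" using F.F_img_sub[OF r\<theta>] by (simp add: image_restrict_eq)
    have cR0: "centric S F (\<theta> ` Qm)"
      using F.centric_conj[OF cQm F.F_conj_of[OF r\<theta>]] by (simp add: image_restrict_eq)
    have "\<exists>w\<in>\<theta> ` Qm. \<forall>y\<in>\<theta> ` Q'. \<alpha>0 y = cj S w y"
    proof (rule F.A8n[OF F.F_img_sub[OF \<theta>F] R0s _ _ cR0 \<alpha>0F])
      show "\<theta> ` Qm \<subseteq> \<theta> ` Q'" using QmQ' by blast
      show "cj S g r \<in> \<theta> ` Qm" if gr: "g \<in> \<theta> ` Q'" "r \<in> \<theta> ` Qm" for g r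
      proof -
        obtain x where x: "x \<in> Q'" "g = \<theta> x" using gr(1) by blast
        obtain q where q: "q \<in> Qm" "r = \<theta> q" using gr(2) by blast
        have qQ': "q \<in> Q'" using q(1) QmQ' by blast
        have "cj S g r = \<theta> (cj S x q)" using F.F_cj[OF \<theta>F x(1) qQ'] x(2) q(2) by simp
        moreover have "cj S x q \<in> Qm" using x(1) q(1) unfolding Q'_def by blast
        ultimately show ?thesis by blast
      qed
      show "\<alpha>0 r = r" if r: "r \<in> \<theta> ` Qm" for r
      proof -
        obtain q where q: "q \<in> Qm" "r = \<theta> q" using r by blast
        have qQ': "q \<in> Q'" using q(1) QmQ' by blast
        show ?thesis using \<alpha>0_app[OF qQ'] \<chi>'Qm[OF q(1)] q(2) by simp
      qed
    qed
    then obtain w where w: "w \<in> \<theta> ` Qm" "\<And>y. y \<in> \<theta> ` Q' \<Longrightarrow> \<alpha>0 y = cj S w y" by blast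
    have wc: "w \<in> carrier S" using w(1) subgroup.mem_carrier[OF R0s] by blast
    have wfix: "cj S w y = y" if y: "y \<in> \<theta> ` Qm" for y
    proof -
      obtain q where q: "q \<in> Qm" "y = \<theta> q" using y by blast
      have qQ': "q \<in> Q'" using q(1) QmQ' by blast
      have "y \<in> \<theta> ` Q'" using q(2) qQ' by simp
      hence "cj S w y = \<alpha>0 y" using w(2)[of y] by simp
      also have "\<dots> = y" using \<alpha>0_app[OF qQ'] \<chi>'Qm[OF q(1)] q(2) by simp
      finally show ?thesis .
    qed
    define z' where "z' = w \<otimes> z"
    have z'c: "z' \<in> carrier S" unfolding z'_def using wc zc by simp
    have z'cen: "z' \<in> centS S \<Phi>"
      unfolding centS_def
    proof (intro CollectI conjI ballI)
      show "z' \<in> carrier S" by (rule z'c)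
      fix y assume y: "y \<in> \<Phi>"
      obtain a where a: "a \<in> A" "y = \<phi> a" using y unfolding \<Phi>_def by blast
      have yc: "y \<in> carrier S" using y \<Phi>B subgroup.mem_carrier[OF Bs] by blast
      have aQm: "a \<in> Qm" using a(1) AQm by (simp add: subset_iff)
      have "\<theta> a \<in> \<theta> ` Qm" by (rule imageI[OF aQm])
      hence "y \<in> \<theta> ` Qm" using \<theta>A[OF a(1)] a(2) by simp
      hence wy: "w \<otimes> y = y \<otimes> w" using wfix F.cj_comm_iff[OF wc yc] by simp
      have zy: "z \<otimes> y = y \<otimes> z" using z y unfolding centS_def by simp
      have "z' \<otimes> y = w \<otimes> (z \<otimes> y)" unfolding z'_def using wc zc yc by (simp add: F.m_assoc)
      also have "\<dots> = w \<otimes> (y \<otimes> z)" using zy by simp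
      also have "\<dots> = (w \<otimes> y) \<otimes> z" using wc zc yc by (simp add: F.m_assoc)
      also have "\<dots> = (y \<otimes> w) \<otimes> z" using wy by simp
      also have "\<dots> = y \<otimes> z'" unfolding z'_def using wc zc yc by (simp add: F.m_assoc)
      finally show "z' \<otimes> y = y \<otimes> z'" .
    qed
    have "Inv Q'"
      unfolding Inv_def
    proof (intro conjI exI)
      show "subgroup Q' S" by (rule Q's)
      show "A \<subseteq> Q'" by (rule AQ')
      show "Q' \<subseteq> Xg" by (rule Q'Xg)
      show "\<chi>' \<in> H Q' (carrier S)" by (rule \<chi>'H)
      show "z' \<in> centS S \<Phi>" by (rule z'cen)
      show "\<forall>x\<in>Q'. \<chi>' x = cj S z' (\<psi> x)"
      proof
        fix x assume x: "x \<in> Q'"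
        have "\<chi>' x = \<alpha>0 (\<theta> x)" using \<alpha>0_app[OF x] by simp
        also have "\<dots> = cj S w (\<theta> x)" using w(2) x by blast
        also have "\<dots> = cj S w (cj S z (\<psi> x))" using x unfolding \<theta>_def by simp
        also have "\<dots> = cj S z' (\<psi> x)"
        proof -
          have xX: "x \<in> Xg" using x Q'Xg by (simp add: subset_iff)
          show ?thesis unfolding z'_def using F.cj_mult[OF wc zc \<psi>c[OF xX]] by simp
        qed
        finally show "\<chi>' x = cj S z' (\<psi> x)" .
      qed
    qed
    hence "card Q' \<le> M" by (rule leM)
    thus False using cardlt Qm(2) by simp
  qed
  obtain \<chi> z where \<chi>: "\<chi> \<in> H Xg (carrier S)" and z: "z \<in> centS S \<Phi>" and \<chi>e: "\<And>x. x \<in> Xg \<Longrightarrow> \<chi> x = cj S z (\<psi> x)"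
    using Qm(1) QmX unfolding Inv_def by blast
  have zc: "z \<in> carrier S" using z unfolding centS_def by simp
  have zB: "z \<in> B" using z C\<Phi> \<Phi>B by blast
  have zN: "cj S z ` P = P" using zB B unfolding normS_def by blast
  have \<chi>Yg: "\<chi> ` Xg \<subseteq> Yg"
  proof (rule subsetI)
    fix y assume "y \<in> \<chi> ` Xg"
    then obtain x where x: "x \<in> Xg" "y = \<chi> x" by blast
    have "\<psi> x \<in> B <#> P" using F.F_into[OF \<psi>Xg x(1)] unfolding Yg_def .
    then obtain b q where bq: "b \<in> B" "q \<in> P" "\<psi> x = b \<otimes> q" unfolding set_mult_def by blast
    have bc: "b \<in> carrier S" by (rule subgroup.mem_carrier[OF Bs bq(1)])
    have qc: "q \<in> carrier S" by (rule subgroup.mem_carrier[OF P bq(2)])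
    have "y = cj S z b \<otimes> cj S z q" using x \<chi>e bq(3) F.cj_hom[OF zc bc qc] by simp
    moreover have "cj S z b \<in> B" unfolding cj_def
      using subgroup.m_closed[OF Bs subgroup.m_closed[OF Bs zB bq(1)] subgroup.m_inv_closed[OF Bs zB]] .
    moreover have "cj S z q \<in> P" using zN bq(2) by blast
    ultimately show "y \<in> Yg" unfolding Yg_def set_mult_def by blast
  qed
  have \<chi>XY: "\<chi> \<in> H Xg Yg" by (rule H.F_enlarge[OF \<chi> Ys \<chi>Yg])
  have \<chi>P: "\<chi> ` P = P"
  proof -
    have "\<chi> ` P = (\<lambda>x. cj S z (\<psi> x)) ` P"
      by (rule image_cong[OF refl]) (use \<chi>e PX in \<open>simp add: subset_iff\<close>)
    also have "\<dots> = cj S z ` (\<psi> ` P)" by (simp add: image_image)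
    finally have "\<chi> ` P = cj S z ` (\<psi> ` P)" .
    thus ?thesis using \<psi>(2) zN by simp
  qed
  have \<chi>A: "\<chi> x = \<phi> x" if x: "x \<in> A" for x
  proof -
    have "\<chi> x = cj S z (\<phi> x)" using \<chi>e x AX \<psi>(3) by auto
    also have "\<dots> = \<phi> x" using zfix[OF z] x unfolding \<Phi>_def by blast
    finally show ?thesis .
  qed
  have ex: "\<exists>\<psi>'\<in>H (A <#> P) (B <#> P). \<psi>' ` P = P \<and> (\<forall>x\<in>A. \<psi>' x = \<phi> x)"
    using \<chi>XY \<chi>P \<chi>A unfolding Xg_def Yg_def by blast
  show ?thesis unfolding normF_def using A B \<phi>H ex by simp
qed

end

theorem lemma4p2:
  fixes S :: "'a monoid" and p :: nat and F H :: "'a fus" and P :: "'a set"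
  assumes "saturated p S F" and "saturated p S H" and "subsystem H F"
    and "fully_normalized S F P"
  defines "\<N> \<equiv> inter_fus (normF S F P) H"
  shows "(\<forall>A B. normF S H P A B \<subseteq> \<N> A B)
    \<and> (\<forall>A B. A \<subseteq> normS S P \<longrightarrow> B \<subseteq> normS S P \<longrightarrow> centric S F A \<longrightarrow> centric S F B \<longrightarrow>
           \<N> A B = normF S H P A B)
    \<and> (\<forall>\<C>. (\<forall>Q\<in>\<C>. centric S F Q) \<longrightarrow>
           (\<forall>R\<in>\<C>. \<forall>Q\<in>\<C>. R \<subseteq> normS S P \<longrightarrow> Q \<subseteq> normS S P \<longrightarrow>
              orbit_hom S \<N> R Q = orbit_hom S (normF S H P) R Q))"
proof -
  have Nd: "\<N> A B = normF S F P A B \<inter> H A B" for A B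
    using \<open>\<N> \<equiv> inter_fus (normF S F P) H\<close> by (simp add: inter_fus_def)
  have fsF: "fusion_system S (carrier S) F" using assms(1) by (simp add: saturated_def)
  have fsH: "fusion_system S (carrier S) H" using assms(2) by (simp add: saturated_def)
  have sF: "satsys S F p" unfolding satsys_def satsys_axioms_def fsys_def using fsF assms(1) by simp
  have sH: "satsys S H p" unfolding satsys_def satsys_axioms_def fsys_def using fsH assms(2) by simp
  have hsub: "\<And>A B. H A B \<subseteq> F A B" using assms(3) by (simp add: subsystem_def)
  interpret T: two S F H p unfolding two_def two_axioms_def using sF sH hsub by simp
  have Ps: "subgroup P S" using assms(4) by (simp add: fully_normalized_def)
  have p1: "normF S H P A B \<subseteq> \<N> A B" for A B
  proof (rule subsetI)
    fix \<phi> assume \<phi>: "\<phi> \<in> normF S H P A B"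
    have AB: "A \<subseteq> normS S P \<and> B \<subseteq> normS S P"
    proof (rule ccontr)
      assume c: "\<not> (A \<subseteq> normS S P \<and> B \<subseteq> normS S P)"
      have "normF S H P A B = {}" unfolding normF_def by (rule if_not_P[OF c])
      thus False using \<phi> by simp
    qed
    have \<phi>H: "\<phi> \<in> H A B" and ex: "\<exists>\<psi>\<in>H (A <#>\<^bsub>S\<^esub> P) (B <#>\<^bsub>S\<^esub> P). \<psi> ` P = P \<and> (\<forall>x\<in>A. \<psi> x = \<phi> x)"
      using \<phi> AB unfolding normF_def by simp_all
    obtain \<psi> where \<psi>: "\<psi> \<in> H (A <#>\<^bsub>S\<^esub> P) (B <#>\<^bsub>S\<^esub> P)" "\<psi> ` P = P" "\<forall>x\<in>A. \<psi> x = \<phi> x"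
      using ex by blast
    have \<psi>F: "\<psi> \<in> F (A <#>\<^bsub>S\<^esub> P) (B <#>\<^bsub>S\<^esub> P)" using \<psi>(1) hsub by blast
    have \<phi>F: "\<phi> \<in> F A B" using \<phi>H hsub by blast
    have "\<phi> \<in> normF S F P A B" unfolding normF_def using AB \<phi>F \<psi>F \<psi>(2,3) by auto
    thus "\<phi> \<in> \<N> A B" using Nd \<phi>H by simp
  qed
  have p2: "\<N> A B = normF S H P A B"
    if A: "A \<subseteq> normS S P" and B: "B \<subseteq> normS S P" and cA: "centric S F A" for A B
  proof
    show "normF S H P A B \<subseteq> \<N> A B" by (rule p1)
    show "\<N> A B \<subseteq> normF S H P A B"
    proof (rule subsetI)
      fix \<phi> assume "\<phi> \<in> \<N> A B"
      hence "\<phi> \<in> normF S F P A B" "\<phi> \<in> H A B" using Nd by auto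
      thus "\<phi> \<in> normF S H P A B" using T.part2[OF Ps A B cA] by blast
    qed
  qed
  show ?thesis
  proof (intro conjI allI impI ballI)
    show "normF S H P A B \<subseteq> \<N> A B" for A B by (rule p1)
    show "\<N> A B = normF S H P A B"
      if "A \<subseteq> normS S P" "B \<subseteq> normS S P" "centric S F A" "centric S F B" for A B
      using p2 that by blast
    show "orbit_hom S \<N> R Q = orbit_hom S (normF S H P) R Q"
      if "\<forall>Q\<in>\<C>. centric S F Q" "R \<in> \<C>" "Q \<in> \<C>" "R \<subseteq> normS S P" "Q \<subseteq> normS S P" for \<C> R Q
    proof -
      have "\<N> R Q = normF S H P R Q" using p2[of R Q] that by blast
      thus ?thesis unfolding orbit_hom_def by simp
    qed
  qed
qed

end
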